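(* Given a sequence of positive integers $r_n$ and a constant prime $p$, it is possible to find an irreducible polynomial of degree $r_n$ in $GF(p)[\xi]$ in space $3 r_n + O(\log r_n)$.
   Context: Polynomials over $GF(p)$ are represented by their coefficient vectors; space is measured on a deterministic space-bounded Turing machine. *)

theory Defs
  imports "Berlekamp_Zassenhaus.Finite_Field" "HOL-Computational_Algebra.Polynomial"
begin

text \<open>A deterministic multi-tape Turing machine with a read-only binary input tape,
  k work tapes over the alphabet GF(p) plus a blank (None), and a write-only
  outp tape on which elements of GF(p) are appended.  Space = total number of
  work-tape cells visited (input and outp tapes are not counted).
  State 0 is the start state, state 1 the (unique) halting state.\<close>

datatype move = MLeft | MStay | MRight

type_synonym 'p wsym = "'p mod_ring option"

record 'p tm =
  ntapes :: nat
  nstates :: nat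
  delta :: "nat \<Rightarrow> bool option \<Rightarrow> 'p wsym list
              \<Rightarrow> nat \<times> move \<times> 'p wsym list \<times> move list \<times> 'p mod_ring option"

definition wf_tm :: "'p tm \<Rightarrow> bool" where
  "wf_tm M \<longleftrightarrow> 2 \<le> nstates M \<and>
     (\<forall>q a rs. q < nstates M \<longrightarrow> length rs = ntapes M \<longrightarrow>
        (case delta M q a rs of (q', mi, ws, ms, ot) \<Rightarrow>
           q' < nstates M \<and> length ws = ntapes M \<and> length ms = ntapes M))"

record 'p config =
  cstate :: nat
  ipos :: nat
  heads :: "nat list"
  tapes :: "(nat \<Rightarrow> 'p wsym) list"
  outp :: "'p mod_ring list"

fun move_head :: "move \<Rightarrow> nat \<Rightarrow> nat" where
  "move_head MLeft h = h - 1"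
| "move_head MStay h = h"
| "move_head MRight h = Suc h"

definition init_config :: "'p tm \<Rightarrow> 'p config" where
  "init_config M = \<lparr>cstate = 0, ipos = 0, heads = replicate (ntapes M) 0,
     tapes = replicate (ntapes M) (\<lambda>_. None), outp = []\<rparr>"

definition input_sym :: "bool list \<Rightarrow> nat \<Rightarrow> bool option" where
  "input_sym x i = (if i < length x then Some (x ! i) else None)"

definition step :: "'p tm \<Rightarrow> bool list \<Rightarrow> 'p config \<Rightarrow> 'p config" where
  "step M x c =
    (if cstate c = 1 then c else
     (case delta M (cstate c) (input_sym x (ipos c)) (map2 (\<lambda>t h. t h) (tapes c) (heads c)) of
       (q', mi, ws, ms, ot) \<Rightarrow>
         \<lparr>cstate = q', ipos = move_head mi (ipos c),
          heads = map2 move_head ms (heads c),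
          tapes = map2 (\<lambda>(t, h) w. t(h := w)) (zip (tapes c) (heads c)) ws,
          outp = outp c @ (case ot of None \<Rightarrow> [] | Some a \<Rightarrow> [a])\<rparr>))"

definition run :: "'p tm \<Rightarrow> bool list \<Rightarrow> nat \<Rightarrow> 'p config" where
  "run M x t = (step M x ^^ t) (init_config M)"

definition space_used :: "'p tm \<Rightarrow> bool list \<Rightarrow> nat \<Rightarrow> nat" where
  "space_used M x t = (\<Sum>i<ntapes M. Max {Suc (heads (run M x t') ! i) | t'. t' \<le> t})"

definition computes_in_space :: "'p tm \<Rightarrow> bool list \<Rightarrow> 'p mod_ring list \<Rightarrow> real \<Rightarrow> bool" where
  "computes_in_space M x ys s \<longleftrightarrow>
     (\<exists>t. cstate (run M x t) = 1 \<and> outp (run M x t) = ys \<and> real (space_used M x t) \<le> s)"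

fun nat_bits :: "nat \<Rightarrow> bool list" where
  "nat_bits n = (if n = 0 then [] else odd n # nat_bits (n div 2))"

end

theory Submission
  imports Defs "Berlekamp_Zassenhaus.Distinct_Degree_Factorization"
begin


abbreviation XX :: "'p::prime_card mod_ring poly" where "XX \<equiv> monom 1 1"

lemma frob_dvd:
  fixes f g :: "'p::prime_card mod_ring poly"
  assumes "f dvd XX^(CARD('p)^a) - XX"
  shows "f dvd g^(CARD('p)^a) - g"
proof (induction g)
  case 0
  then show ?case by (simp add: zero_power)
next
  case (pCons c g)
  let ?Q = "CARD('p)^a"
  have e: "pCons c g = [:c:] + XX * g" by (simp add: monom_Suc pCons_one)
  have "(pCons c g)^?Q = [:c:] + XX^?Q * g^?Q"
    unfolding e add_power_prime_poly_mod_ring fermat_theorem_power_poly power_mult_distrib ..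
  hence "(pCons c g)^?Q - pCons c g = XX^?Q * (g^?Q - g) + (XX^?Q - XX) * g"
    unfolding e by (simp add: algebra_simps)
  thus ?case using pCons(2) assms by (simp add: dvd_add dvd_mult dvd_mult2)
qed

lemma S_add:
  fixes f :: "'p::prime_card mod_ring poly"
  assumes "f dvd XX^(CARD('p)^a) - XX" "f dvd XX^(CARD('p)^b) - XX"
  shows "f dvd XX^(CARD('p)^(a+b)) - XX"
proof -
  have e: "XX^(CARD('p)^(a+b)) = (XX^(CARD('p)^b))^(CARD('p)^a)"
    by (metis power_add power_mult mult.commute)
  have "XX^(CARD('p)^(a+b)) - XX = ((XX^(CARD('p)^b))^(CARD('p)^a) - XX^(CARD('p)^b)) + (XX^(CARD('p)^b) - XX)"
    unfolding e by simp
  thus ?thesis using frob_dvd[OF assms(1)] assms(2) by (metis dvd_add)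
qed

lemma S_sub:
  fixes f :: "'p::prime_card mod_ring poly"
  assumes "f dvd XX^(CARD('p)^a) - XX" "f dvd XX^(CARD('p)^(a+b)) - XX"
  shows "f dvd XX^(CARD('p)^b) - XX"
proof -
  have e: "XX^(CARD('p)^(a+b)) = (XX^(CARD('p)^b))^(CARD('p)^a)"
    by (metis power_add power_mult mult.commute)
  have "XX^(CARD('p)^b) - XX = (XX^(CARD('p)^(a+b)) - XX) - ((XX^(CARD('p)^b))^(CARD('p)^a) - XX^(CARD('p)^b))"
    unfolding e by simp
  thus ?thesis using frob_dvd[OF assms(1)] assms(2) by (metis dvd_diff)
qed

lemma S_mod:
  fixes f :: "'p::prime_card mod_ring poly"
  assumes "f dvd XX^(CARD('p)^a) - XX" "f dvd XX^(CARD('p)^b) - XX"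
  shows "f dvd XX^(CARD('p)^(b mod a)) - XX"
  using assms(2)
proof (induction b rule: less_induct)
  case (less b)
  show ?case
  proof (cases "b < a \<or> a = 0")
    case True
    then show ?thesis using less.prems by auto
  next
    case False
    hence b: "b = a + (b - a)" "b - a < b" by auto
    have "f dvd XX^(CARD('p)^(b-a)) - XX"
      using S_sub[OF assms(1), of "b-a"] less.prems b(1) by simp
    from less.IH[OF b(2) this] False show ?thesis
      by (simp add: le_mod_geq)
  qed
qed

lemma S_gcd:
  fixes f :: "'p::prime_card mod_ring poly"
  assumes "f dvd XX^(CARD('p)^a) - XX" "f dvd XX^(CARD('p)^b) - XX"
  shows "f dvd XX^(CARD('p)^(gcd a b)) - XX"
  using assms
proof (induction a b rule: gcd_nat_induct)
  case (step m n)
  then show ?case using S_mod[OF step(4) step(3)] by (simp add: gcd_non_0_nat)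
qed simp

lemma irr_deg_dvd:
  fixes f :: "'p::prime_card mod_ring poly"
  assumes irr: "irreducible f" and dv: "f dvd XX^(CARD('p)^n) - XX" and n: "n > 0"
  shows "degree f dvd n"
proof -
  define d where "d = degree f"
  have d0: "d > 0" unfolding d_def using irr
    by (metis irreducible_def is_unit_iff_degree neq0_conv irreducible_not_unit)
  have "f dvd XX^(CARD('p)^d) - XX" using degree_divisor1[OF irr] d_def by simp
  from S_gcd[OF this dv] have g: "f dvd XX^(CARD('p)^(gcd d n)) - XX" .
  have "gcd d n \<ge> 1" using n by (simp add: Suc_le_eq)
  moreover have "gcd d n \<le> d" using d0 by (simp add: gcd_le1_nat)
  ultimately have "gcd d n = d" using degree_divisor2[OF irr d_def[symmetric], of "gcd d n"] g
    by fastforce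
  thus ?thesis unfolding d_def by (metis gcd_dvd2)
qed

lemma XXpow: "(XX::'p::prime_card mod_ring poly)^k = monom 1 k"
  by (simp add: monom_power)

lemma degA:
  assumes "n > 0"
  shows "degree ((XX::'p::prime_card mod_ring poly)^(CARD('p)^n) - XX) = CARD('p)^n"
proof -
  have q: "CARD('p) \<ge> 2" using prime_card[where 'a='p] prime_ge_2_nat by blast
  have "CARD('p)^n \<ge> CARD('p)^1" using assms q by (intro power_increasing) auto
  hence gt: "CARD('p)^n > 1" using q by simp
  show ?thesis unfolding XXpow using gt
    using degree_add_eq_left[of "- monom 1 1" "monom (1::'p mod_ring) (CARD('p)^n)"]
    by (simp add: degree_monom_eq)
qed

lemma sepA:
  assumes "n > 0"
  shows "square_free ((XX::'p::prime_card mod_ring poly)^(CARD('p)^n) - XX)"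
proof -
  have c: "(of_nat (CARD('p)^n) :: 'p mod_ring) = 0" using assms by simp
  have "pderiv ((XX::'p::prime_card mod_ring poly)^(CARD('p)^n) - XX) = -1"
  proof -
    have d1: "pderiv (monom (1::'p mod_ring) (CARD('p)^n)) = 0"
      unfolding pderiv_monom c by simp
    have d2: "pderiv (monom (1::'p mod_ring) 1) = 1"
      unfolding pderiv_monom by (simp add: one_poly_def monom_0)
    show ?thesis unfolding XXpow pderiv_diff d1 d2 by simp
  qed
  hence "separable ((XX::'p::prime_card mod_ring poly)^(CARD('p)^n) - XX)"
    unfolding separable_def by simp
  thus ?thesis by (rule separable_imp_square_free)
qed

lemma sum_pow_less: "(q::nat) \<ge> 2 \<Longrightarrow> (\<Sum>d<n. q^d) < q^n"
proof (induction n)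
  case (Suc n)
  have "2 * q^n \<le> q * q^n" using Suc.prems by (rule mult_le_mono1)
  hence "q^n + q^n \<le> q * q^n" by (simp only: mult_2)
  then show ?case using Suc by simp
qed simp

lemma exists_irreducible:
  assumes n: "n > 0"
  shows "\<exists>f :: 'p::prime_card mod_ring poly. irreducible f \<and> degree f = n"
proof (rule ccontr)
  assume none: "\<not> ?thesis"
  define A :: "'p mod_ring poly" where "A = XX^(CARD('p)^n) - XX"
  define B :: "'p mod_ring poly" where "B = (\<Prod>d\<in>{1..<n}. XX^(CARD('p)^d) - XX)"
  have q: "CARD('p) \<ge> 2" using prime_card[where 'a='p] prime_ge_2_nat by blast
  have dA: "degree A = CARD('p)^n" unfolding A_def using degA[OF n] .
  have "CARD('p)^n > 0" using q by simp
  hence A0: "A \<noteq> 0" using dA by (intro notI) simp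
  have fac0: "d \<in> {1..<n} \<Longrightarrow> XX^(CARD('p)^d) - (XX::'p mod_ring poly) \<noteq> 0" for d
  proof
    assume d: "d \<in> {1..<n}" and z: "XX^(CARD('p)^d) - (XX::'p mod_ring poly) = 0"
    have "CARD('p)^d > 0" using q by simp
    moreover have "degree (XX^(CARD('p)^d) - (XX::'p mod_ring poly)) = CARD('p)^d"
      using d by (intro degA) simp
    ultimately show False using z by simp
  qed
  hence B0: "B \<noteq> 0" unfolding B_def by simp
  have dB: "degree B = (\<Sum>d\<in>{1..<n}. CARD('p)^d)" unfolding B_def
  proof (subst degree_prod_eq_sum_degree)
    show "\<forall>d\<in>{1..<n}. XX ^ CARD('p) ^ d - (XX::'p mod_ring poly) \<noteq> 0" using fac0 by blast
    show "(\<Sum>d\<in>{1..<n}. degree (XX ^ CARD('p) ^ d - (XX::'p mod_ring poly))) = (\<Sum>d\<in>{1..<n}. CARD('p) ^ d)"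
      by (intro sum.cong refl degA) simp
  qed
  have sf: "square_free A" unfolding A_def using sepA[OF n] .
  have "A dvd B"
  proof (rule multiplicity_le_imp_dvd[OF A0])
    fix p :: "'p mod_ring poly" assume p: "prime p"
    show "multiplicity p A \<le> multiplicity p B"
    proof (cases "p dvd A")
      case False
      then show ?thesis by (simp add: not_dvd_imp_multiplicity_0)
    next
      case True
      have irr: "irreducible p" using p by (intro prime_elem_imp_irreducible prime_imp_prime_elem)
      have "p \<noteq> 0" "\<not> is_unit p" using irr by (auto simp: irreducible_def)
      hence dp0: "degree p > 0" using is_unit_iff_degree by blast
      have m1: "multiplicity p A \<le> 1"
      proof (rule ccontr)
        assume "\<not> ?thesis"
        hence "p^2 dvd p ^ multiplicity p A" by (intro le_imp_power_dvd) simp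
        hence "p^2 dvd A" using multiplicity_dvd dvd_trans by blast
        hence "p * p dvd A" by (simp add: power2_eq_square)
        with sf dp0 show False unfolding square_free_def by auto
      qed
      have "degree p dvd n" using irr_deg_dvd[OF irr True[unfolded A_def] n] .
      hence "degree p \<le> n" using n by (simp add: dvd_imp_le)
      moreover have "degree p \<noteq> n" using none irr by blast
      ultimately have "degree p < n" by simp
      hence dm: "degree p \<in> {1..<n}" using dp0 by simp
      have "p dvd XX^(CARD('p)^degree p) - XX" using degree_divisor1[OF irr refl] .
      also have "\<dots> dvd B" unfolding B_def using dvd_prodI[OF _ dm, of "\<lambda>d. XX^(CARD('p)^d) - (XX::'p mod_ring poly)"] by simp
      finally have "p dvd B" .
      hence "multiplicity p B > 0" using B0 prime_imp_prime_elem[OF p]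
        by (simp add: prime_multiplicity_gt_zero_iff)
      thus ?thesis using m1 by linarith
    qed
  qed
  hence dAB: "degree A \<le> degree B" using B0 by (rule dvd_imp_degree_le)
  have "(\<Sum>d\<in>{1..<n}. CARD('p)^d) \<le> (\<Sum>d<n. CARD('p)^d)"
    by (rule sum_mono2) auto
  also have "\<dots> < CARD('p)^n" using sum_pow_less[OF q, of n] .
  finally have "degree B < degree A" unfolding dB dA .
  with dAB show False by simp
qed


datatype 'p actn = Act nat "'p mod_ring" "'p mod_ring" move "'p wsym" "'p wsym" "'p wsym" "'p wsym"
   move move move move "'p mod_ring option"

definition idx :: "'p::prime_card mod_ring \<Rightarrow> nat" where
  "idx a = nat (to_int_mod_ring a)"
definition frm :: "nat \<Rightarrow> 'p::prime_card mod_ring" where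
  "frm n = of_int_mod_ring (int n)"

lemma idx_lt: "idx (a::'p::prime_card mod_ring) < CARD('p)"
proof -
  have "to_int_mod_ring a \<in> range (to_int_mod_ring :: 'p mod_ring \<Rightarrow> int)" by (rule rangeI)
  hence "0 \<le> to_int_mod_ring a \<and> to_int_mod_ring a < CARD('p)"
    unfolding range_to_int_mod_ring by simp
  thus ?thesis unfolding idx_def by linarith
qed

lemma frm_idx[simp]: "frm (idx (a::'p::prime_card mod_ring)) = a"
proof -
  have "to_int_mod_ring a \<in> range (to_int_mod_ring :: 'p mod_ring \<Rightarrow> int)" by (rule rangeI)
  hence "0 \<le> to_int_mod_ring a" unfolding range_to_int_mod_ring by simp
  thus ?thesis unfolding idx_def frm_def by simp
qed

lemma idx_inj: "idx a = idx b \<Longrightarrow> a = b"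
  by (metis frm_idx)

lemma idx_0[simp]: "idx (0::'p::prime_card mod_ring) = 0"
  unfolding idx_def by simp

definition enc :: "nat \<Rightarrow> 'p::prime_card mod_ring \<Rightarrow> 'p mod_ring \<Rightarrow> nat" where
  "enc l u v = l + 34 * (idx u + CARD('p) * idx v)"

lemma enc_1[simp]: "enc 1 0 0 = 1" unfolding enc_def by simp

lemma lk34: "l < 34 \<Longrightarrow> (l + 34 * (k::nat)) mod 34 = l \<and> (l + 34 * k) div 34 = k" by simp
lemma enc_mod: "l < 34 \<Longrightarrow> enc l u v mod 34 = l" unfolding enc_def using lk34 by blast
lemma enc_div: "l < 34 \<Longrightarrow> enc l (u::'p::prime_card mod_ring) v div 34 = idx u + CARD('p) * idx v" unfolding enc_def using lk34 by blast

lemma enc_lt: assumes "l < 34" shows "enc l (u::'p::prime_card mod_ring) v < 34 * CARD('p) * CARD('p)"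
proof -
  have "idx u + CARD('p) * idx v \<le> (CARD('p) - 1) + CARD('p) * (CARD('p) - 1)"
    using idx_lt[of u] idx_lt[of v] by (intro add_mono mult_le_mono) auto
  also have "\<dots> = CARD('p) * CARD('p) - 1" by (simp add: algebra_simps)
  finally have "idx u + CARD('p) * idx v < CARD('p) * CARD('p)"
    using idx_lt[of u] by (metis Suc_pred' le_imp_less_Suc mult_pos_pos not_gr_zero not_less_zero)
  hence "idx u + CARD('p) * idx v + 1 \<le> CARD('p) * CARD('p)" by simp
  hence "34 * (idx u + CARD('p) * idx v) + 34 \<le> 34 * (CARD('p) * CARD('p))" by simp
  thus ?thesis unfolding enc_def using assms by simp
qed

lemma enc_ne1: "l < 34 \<Longrightarrow> l \<noteq> 1 \<Longrightarrow> enc l u v \<noteq> 1"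
  using enc_mod[of l u v] by auto

definition valo :: "'p wsym \<Rightarrow> 'p::prime_card mod_ring" where
  "valo s = (case s of Some c \<Rightarrow> c | None \<Rightarrow> 0)"

definition b2v :: "bool \<Rightarrow> 'p::prime_card mod_ring" where
  "b2v b = (if b then 1 else 0)"

abbreviation "Rm \<equiv> MRight"
abbreviation "Lm \<equiv> MLeft"
abbreviation "Sm \<equiv> MStay"

definition actf :: "nat \<Rightarrow> 'p::prime_card mod_ring \<Rightarrow> 'p mod_ring \<Rightarrow> bool option \<Rightarrow>
   'p wsym \<Rightarrow> 'p wsym \<Rightarrow> 'p wsym \<Rightarrow> 'p wsym \<Rightarrow> 'p actn" where
"actf l u v a s0 s1 s2 s3 = (
 if l = 0 then Act 2 u v Sm s0 s1 s2 s3 Rm Sm Sm Rm None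
 else if l = 2 then (case a of Some b \<Rightarrow> Act 2 u v Rm s0 s1 s2 (Some (b2v b)) Sm Sm Sm Rm None
                           | None \<Rightarrow> Act 3 u v Sm s0 s1 s2 s3 Sm Sm Sm Lm None)
 else if l = 3 then (case s3 of Some _ \<Rightarrow> Act 3 u v Sm s0 s1 s2 s3 Sm Sm Sm Lm None
                           | None \<Rightarrow> Act 4 u v Sm s0 s1 s2 s3 Sm Sm Sm Rm None)
 else if l = 4 then (case s3 of None \<Rightarrow> Act 6 u v Sm s0 s1 s2 s3 Sm Sm Sm Sm None
                           | Some b \<Rightarrow> if b = 0 then Act 4 u v Sm s0 s1 s2 (Some 1) Sm Sm Sm Rm None
                                       else Act 5 u v Sm s0 s1 s2 (Some 0) Sm Sm Sm Lm None)
 else if l = 5 then (case s3 of Some _ \<Rightarrow> Act 5 u v Sm s0 s1 s2 s3 Sm Sm Sm Lm None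
                           | None \<Rightarrow> Act 4 u v Sm (Some 0) s1 s2 s3 Rm Sm Sm Rm None)
 else if l = 6 then Act 7 u v Sm s0 s1 s2 s3 Lm Sm Sm Sm None
 else if l = 7 then (case s0 of Some _ \<Rightarrow> Act 7 u v Sm s0 s1 s2 s3 Lm Sm Sm Sm None
                           | None \<Rightarrow> Act 8 u v Sm s0 s1 s2 s3 Sm Rm Rm Sm None)
 else if l = 8 then Act 10 u v Sm s0 (Some 0) (Some 0) s3 Sm Lm Lm Sm None
 else if l = 10 then Act 11 u v Sm s0 s1 s2 s3 Rm Rm Rm Sm None
 else if l = 11 then Act 12 u v Sm s0 s1 (Some 1) s3 Rm Rm Rm Sm None
 else if l = 12 then (case s1 of Some _ \<Rightarrow> Act 12 u v Sm s0 s1 (Some 0) s3 Rm Rm Rm Sm None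
                           | None \<Rightarrow> (case s0 of None \<Rightarrow> Act 30 u v Sm s0 s1 s2 s3 Sm Sm Sm Sm None
                                                | Some _ \<Rightarrow> Act 13 u v Sm s0 s1 s2 s3 Rm Sm Sm Sm None))
 else if l = 13 then (case s0 of Some _ \<Rightarrow> Act 13 u v Sm s0 s1 s2 s3 Rm Sm Sm Sm None
                           | None \<Rightarrow> Act 14 u v Sm s0 s1 s2 s3 Lm Sm Sm Sm None)
 else if l = 14 then (case s0 of None \<Rightarrow> Act 20 u v Sm s0 s1 s2 s3 Sm Sm Sm Sm None
                           | Some c \<Rightarrow> Act 15 u c Sm s0 s1 s2 s3 Sm Lm Lm Sm None)
 else if l = 15 then Act 16 (valo s2) v Sm s0 s1 s2 s3 Sm Lm Lm Sm None
 else if l = 16 then (case s1 of Some _ \<Rightarrow> Act 16 u v Sm s0 s1 s2 s3 Sm Lm Lm Sm None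
                           | None \<Rightarrow> Act 17 u v Sm s0 s1 s2 s3 Sm Rm Rm Sm None)
 else if l = 17 then (case s1 of None \<Rightarrow> Act 14 u v Sm s0 s1 s2 s3 Lm Sm Sm Sm None
                           | Some g \<Rightarrow> Act 17 u (valo s2) Sm s0 s1 (Some (v - u * g)) s3 Sm Rm Rm Sm None)
 else if l = 20 then Act 21 u v Sm s0 s1 s2 s3 Sm Lm Lm Sm None
 else if l = 21 then (case s1 of None \<Rightarrow> Act 25 u v Sm s0 s1 s2 s3 Sm Sm Sm Sm None
                           | Some _ \<Rightarrow> if s2 = Some 0 then Act 21 u v Sm s0 s1 s2 s3 Sm Lm Lm Sm None
                                      else Act 22 u v Sm s0 s1 s2 s3 Sm Sm Sm Sm None)
 else if l = 22 then (case s1 of Some _ \<Rightarrow> Act 22 u v Sm s0 s1 s2 s3 Sm Lm Lm Sm None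
                           | None \<Rightarrow> Act 23 u v Sm s0 s1 s2 s3 Sm Rm Rm Sm None)
 else if l = 23 then (case s1 of None \<Rightarrow> Act 24 u v Sm s0 (Some 0) (Some 0) s3 Sm Lm Lm Sm None
                           | Some g \<Rightarrow> if g + 1 = 0 then Act 23 u v Sm s0 (Some 0) s2 s3 Sm Rm Rm Sm None
                                      else Act 24 u v Sm s0 (Some (g + 1)) s2 s3 Sm Lm Lm Sm None)
 else if l = 24 then (case s1 of Some _ \<Rightarrow> Act 24 u v Sm s0 s1 s2 s3 Sm Lm Lm Sm None
                           | None \<Rightarrow> Act 10 u v Sm s0 s1 s2 s3 Sm Sm Sm Sm None)
 else if l = 25 then Act 26 u v Sm s0 s1 s2 s3 Rm Sm Sm Sm None
 else if l = 26 then (case s0 of None \<Rightarrow> Act 26 u v Sm s0 s1 s2 s3 Sm Sm Sm Sm None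
                           | Some c \<Rightarrow> if c + 1 = 0 then Act 26 u v Sm (Some 0) s1 s2 s3 Rm Sm Sm Sm None
                                      else Act 27 u v Sm (Some (c + 1)) s1 s2 s3 Lm Sm Sm Sm None)
 else if l = 27 then (case s0 of Some _ \<Rightarrow> Act 27 u v Sm s0 s1 s2 s3 Lm Sm Sm Sm None
                           | None \<Rightarrow> Act 28 u v Sm s0 s1 s2 s3 Sm Sm Sm Sm None)
 else if l = 28 then Act 29 u v Sm s0 s1 s2 s3 Sm Rm Rm Sm None
 else if l = 29 then (case s1 of Some _ \<Rightarrow> Act 29 u v Sm s0 s1 s2 s3 Sm Rm Rm Sm None
                           | None \<Rightarrow> Act 31 u v Sm s0 s1 s2 s3 Sm Lm Lm Sm None)
 else if l = 31 then (case s1 of Some _ \<Rightarrow> Act 31 u v Sm s0 None None s3 Sm Lm Lm Sm None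
                           | None \<Rightarrow> Act 8 u v Sm s0 s1 s2 s3 Sm Rm Rm Sm None)
 else if l = 30 then Act 32 u v Sm s0 s1 s2 s3 Lm Sm Sm Sm None
 else if l = 32 then (case s0 of Some _ \<Rightarrow> Act 32 u v Sm s0 s1 s2 s3 Lm Sm Sm Sm None
                           | None \<Rightarrow> Act 33 u v Sm s0 s1 s2 s3 Rm Sm Sm Sm None)
 else if l = 33 then (case s0 of Some c \<Rightarrow> Act 33 u v Sm s0 s1 s2 s3 Rm Sm Sm Sm (Some c)
                           | None \<Rightarrow> Act 1 0 0 Sm s0 s1 s2 s3 Sm Sm Sm Sm (Some 1))
 else Act l u v Sm s0 s1 s2 s3 Sm Sm Sm Sm None)"

lemma actf_lbl: "l < 34 \<Longrightarrow> actf l u v a s0 s1 s2 s3 = Act l' u' v' mi w0 w1 w2 w3 m0 m1 m2 m3 ot \<Longrightarrow> l' < 34"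
  unfolding actf_def by (auto split: if_splits option.splits)

definition deltaf :: "nat \<Rightarrow> bool option \<Rightarrow> 'p::prime_card wsym list
   \<Rightarrow> nat \<times> move \<times> 'p wsym list \<times> move list \<times> 'p mod_ring option" where
  "deltaf q a rs = (case actf (q mod 34) (frm (q div 34 mod CARD('p))) (frm (q div 34 div CARD('p)))
       a (rs!0) (rs!1) (rs!2) (rs!3) of
     Act l' u' v' mi w0 w1 w2 w3 m0 m1 m2 m3 ot \<Rightarrow>
       (enc l' u' v', mi, [w0,w1,w2,w3], [m0,m1,m2,m3], ot))"

definition MM :: "'p::prime_card tm" where
  "MM = \<lparr>ntapes = 4, nstates = 34 * CARD('p) * CARD('p), delta = deltaf\<rparr>"

lemma wf_MM: "wf_tm (MM :: 'p::prime_card tm)"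
  unfolding wf_tm_def
proof (intro conjI allI impI)
  have "CARD('p) \<ge> 2" using prime_card[where 'a='p] prime_ge_2_nat by blast
  hence "CARD('p) * CARD('p) \<ge> 1" by simp
  thus "2 \<le> nstates (MM :: 'p tm)" unfolding MM_def by simp
next
  fix q a and rs :: "'p wsym list"
  assume "q < nstates (MM :: 'p tm)" "length rs = ntapes (MM :: 'p tm)"
  obtain l' u' v' mi w0 w1 w2 w3 m0 m1 m2 m3 ot where
    A: "actf (q mod 34) (frm (q div 34 mod CARD('p))) (frm (q div 34 div CARD('p)) :: 'p mod_ring)
       a (rs!0) (rs!1) (rs!2) (rs!3) = Act l' u' v' mi w0 w1 w2 w3 m0 m1 m2 m3 ot"
    by (cases "actf (q mod 34) (frm (q div 34 mod CARD('p))) (frm (q div 34 div CARD('p)) :: 'p mod_ring)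
       a (rs!0) (rs!1) (rs!2) (rs!3)") auto
  have "l' < 34" using actf_lbl[OF _ A] by simp
  hence "enc l' u' v' < nstates (MM :: 'p tm)" unfolding MM_def using enc_lt by simp
  thus "case delta (MM :: 'p tm) q a rs of (q', mi, ws, ms, ot) \<Rightarrow>
           q' < nstates (MM :: 'p tm) \<and> length ws = ntapes (MM :: 'p tm) \<and> length ms = ntapes (MM :: 'p tm)"
    unfolding MM_def using A by (simp add: deltaf_def)
qed

lemma dec_enc:
  assumes "l < 34"
  shows "(enc l u v) mod 34 = l" "frm ((enc l u v) div 34 mod CARD('p)) = u"
        "frm ((enc l u v) div 34 div CARD('p)) = (v::'p::prime_card mod_ring)"
proof -
  show "(enc l u v) mod 34 = l" using enc_mod[OF assms] .
  have p0: "CARD('p) > 0" by simp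
  have e: "(enc l u v) div 34 = idx u + CARD('p) * idx v" using enc_div[OF assms] .
  show "frm ((enc l u v) div 34 mod CARD('p)) = u" unfolding e using idx_lt[of u] by simp
  show "frm ((enc l u v) div 34 div CARD('p)) = v" unfolding e using idx_lt[of u] p0 by simp
qed

lemma step_eq:
  assumes "l < 34" "l \<noteq> 1"
  shows "step (MM :: 'p::prime_card tm) x \<lparr>cstate = enc l u v, ipos = i, heads = [h0,h1,h2,h3],
      tapes = [t0,t1,t2,t3], outp = os\<rparr> =
    (case actf l u v (input_sym x i) (t0 h0) (t1 h1) (t2 h2) (t3 h3) of
       Act l' u' v' mi w0 w1 w2 w3 m0 m1 m2 m3 ot \<Rightarrow>
      \<lparr>cstate = enc l' u' v', ipos = move_head mi i,
       heads = [move_head m0 h0, move_head m1 h1, move_head m2 h2, move_head m3 h3],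
       tapes = [t0(h0 := w0), t1(h1 := w1), t2(h2 := w2), t3(h3 := w3)],
       outp = os @ (case ot of None \<Rightarrow> [] | Some a \<Rightarrow> [a])\<rparr>)"
  using assms enc_ne1[OF assms, of u v]
  by (simp add: step_def MM_def deltaf_def dec_enc split: actn.split)


definition reach :: "('p::prime_card config \<Rightarrow> bool) \<Rightarrow> bool list \<Rightarrow> 'p config \<Rightarrow> 'p config \<Rightarrow> bool" where
  "reach P x c c' \<longleftrightarrow> (\<exists>t. (step MM x ^^ t) c = c' \<and> (\<forall>s\<le>t. P ((step MM x ^^ s) c)))"

lemma reach_refl: "P c \<Longrightarrow> reach P x c c"
  unfolding reach_def by (rule exI[of _ 0]) auto

lemma reach_step: assumes "P c" "reach P x (step MM x c) c'" shows "reach P x c c'"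
proof -
  from assms(2) obtain t where t: "(step MM x ^^ t) (step MM x c) = c'"
     "\<forall>s\<le>t. P ((step MM x ^^ s) (step MM x c))" unfolding reach_def by blast
  show ?thesis unfolding reach_def
  proof (intro exI[of _ "Suc t"] conjI allI impI)
    show "(step MM x ^^ Suc t) c = c'" using t(1) by (simp add: funpow_Suc_right del: funpow.simps)
    fix s assume "s \<le> Suc t"
    thus "P ((step MM x ^^ s) c)"
    proof (cases s)
      case 0 thus ?thesis using assms(1) by simp
    next
      case (Suc s') thus ?thesis using t(2) \<open>s \<le> Suc t\<close>
        by (simp add: funpow_Suc_right del: funpow.simps)
    qed
  qed
qed

lemma reach_trans: assumes "reach P x a b" "reach P x b c" shows "reach P x a c"
proof -
  from assms(1) obtain t where t: "(step MM x ^^ t) a = b" "\<forall>s\<le>t. P ((step MM x ^^ s) a)"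
    unfolding reach_def by blast
  from assms(2) obtain t' where t': "(step MM x ^^ t') b = c" "\<forall>s\<le>t'. P ((step MM x ^^ s) b)"
    unfolding reach_def by blast
  show ?thesis unfolding reach_def
  proof (intro exI[of _ "t' + t"] conjI allI impI)
    show "(step MM x ^^ (t' + t)) a = c" using t(1) t'(1) by (simp add: funpow_add)
    fix s assume s: "s \<le> t' + t"
    show "P ((step MM x ^^ s) a)"
    proof (cases "s \<le> t")
      case True thus ?thesis using t(2) by simp
    next
      case False
      hence "s = (s - t) + t" "s - t \<le> t'" using s by auto
      hence "(step MM x ^^ s) a = (step MM x ^^ (s - t)) b" using t(1)
        by (metis funpow_add comp_apply)
      thus ?thesis using t'(2) \<open>s - t \<le> t'\<close> by simp
    qed
  qed
qed

lemma reach_one: "P c \<Longrightarrow> P c' \<Longrightarrow> step MM x c = c' \<Longrightarrow> reach P x c c'"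
  by (rule reach_step) (auto intro: reach_refl)

lemma reach_one_trans: "P c \<Longrightarrow> step MM x c = c' \<Longrightarrow> reach P x c' c'' \<Longrightarrow> reach P x c c''"
  by (rule reach_step) auto

lemma chain_up:
  assumes "\<And>j. a \<le> j \<Longrightarrow> j < b \<Longrightarrow> step MM x (C j) = C (Suc j)"
      and "\<And>j. a \<le> j \<Longrightarrow> j \<le> b \<Longrightarrow> P (C j)" and "a \<le> b"
  shows "reach P x (C a) (C b)"
  using assms
proof (induction "b - a" arbitrary: a)
  case 0 thus ?case using reach_refl by (metis diff_is_0_eq le_antisym order_refl)
next
  case (Suc n)
  have ab: "a < b" using Suc.hyps(2) by simp
  have 1: "reach P x (C (Suc a)) (C b)"
  proof (rule Suc.hyps(1))
    show "n = b - Suc a" using Suc.hyps(2) by simp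
    show "\<And>j. Suc a \<le> j \<Longrightarrow> j < b \<Longrightarrow> step MM x (C j) = C (Suc j)" using Suc.prems(1) by simp
    show "\<And>j. Suc a \<le> j \<Longrightarrow> j \<le> b \<Longrightarrow> P (C j)" using Suc.prems(2) by simp
    show "Suc a \<le> b" using ab by simp
  qed
  have e: "step MM x (C a) = C (Suc a)" using Suc.prems(1)[of a] ab by simp
  have "reach P x (step MM x (C a)) (C b)" using 1 by (simp only: e)
  moreover have "P (C a)" using Suc.prems(2)[of a] ab by simp
  ultimately show ?case by (metis reach_step)
qed

lemma chain_down:
  assumes "\<And>j. a \<le> j \<Longrightarrow> j < b \<Longrightarrow> step MM x (C (Suc j)) = C j"
      and "\<And>j. a \<le> j \<Longrightarrow> j \<le> b \<Longrightarrow> P (C j)" and "a \<le> b"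
  shows "reach P x (C b) (C a)"
  using assms
proof (induction "b - a" arbitrary: b)
  case 0 thus ?case using reach_refl by (metis diff_is_0_eq le_antisym order_refl)
next
  case (Suc n)
  have ab: "a < b" using Suc.hyps(2) by simp
  then obtain b' where b: "b = Suc b'" by (cases b) auto
  have 1: "reach P x (C b') (C a)"
  proof (rule Suc.hyps(1))
    show "n = b' - a" using Suc.hyps(2) b by simp
    show "\<And>j. a \<le> j \<Longrightarrow> j < b' \<Longrightarrow> step MM x (C (Suc j)) = C j" using Suc.prems(1) b by simp
    show "\<And>j. a \<le> j \<Longrightarrow> j \<le> b' \<Longrightarrow> P (C j)" using Suc.prems(2) b by simp
    show "a \<le> b'" using ab b by simp
  qed
  have e: "step MM x (C b) = C b'" using Suc.prems(1)[of b'] ab b by simp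
  have "reach P x (step MM x (C b)) (C a)" using 1 by (simp only: e)
  moreover have "P (C b)" using Suc.prems(2)[of b] ab by simp
  ultimately show ?case by (metis reach_step)
qed

definition tp :: "'p::prime_card mod_ring list \<Rightarrow> nat \<Rightarrow> 'p wsym" where
  "tp xs i = (if i = 0 then None else if i \<le> length xs then Some (xs ! (i - 1)) else None)"

lemma tp_0[simp]: "tp xs 0 = None" unfolding tp_def by simp
lemma tp_in: "0 < i \<Longrightarrow> i \<le> length xs \<Longrightarrow> tp xs i = Some (xs ! (i - 1))" unfolding tp_def by simp
lemma tp_out: "length xs < i \<Longrightarrow> tp xs i = None" unfolding tp_def by simp
lemma tp_Suc: "j < length xs \<Longrightarrow> tp xs (Suc j) = Some (xs ! j)" unfolding tp_def by simp
lemma tp_upd: "j < length xs \<Longrightarrow> (tp xs)(Suc j := Some a) = tp (xs[j := a])"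
  unfolding tp_def by (auto simp: fun_eq_iff nth_list_update)
lemma tp_app: "(tp xs)(Suc (length xs) := Some a) = tp (xs @ [a])"
  unfolding tp_def by (auto simp: fun_eq_iff nth_append)
lemma tp_del: assumes "xs \<noteq> []" shows "(tp xs)(length xs := None) = tp (butlast xs)"
proof -
  obtain ys y where xs: "xs = ys @ [y]" using assms by (cases xs rule: rev_cases) auto
  show ?thesis unfolding tp_def xs by (auto simp: fun_eq_iff nth_append)
qed
lemma tp_upd_out: "length xs < i \<Longrightarrow> (tp xs)(i := None) = tp xs"
  unfolding tp_def by (auto simp: fun_eq_iff)
lemma tp_upd_0[simp]: "(tp xs)(0 := None) = tp xs"
  unfolding tp_def by (auto simp: fun_eq_iff)
lemma tp_upd_same: "j < length xs \<Longrightarrow> xs ! j = a \<Longrightarrow> (tp xs)(Suc j := Some a) = tp xs"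
  unfolding tp_def by (auto simp: fun_eq_iff)
lemma tp_upd_same2: "0 < i \<Longrightarrow> i \<le> length xs \<Longrightarrow> xs ! (i - 1) = a \<Longrightarrow> (tp xs)(i := Some a) = tp xs"
  unfolding tp_def by (auto simp: fun_eq_iff)
lemma tp_nil: "(\<lambda>_. None) = tp []" unfolding tp_def by (simp add: fun_eq_iff)

definition okb :: "nat \<Rightarrow> nat \<Rightarrow> 'p::prime_card config \<Rightarrow> bool" where
  "okb R Lb c \<longleftrightarrow> heads c ! 0 \<le> Suc R \<and> heads c ! 1 \<le> Suc R \<and> heads c ! 2 \<le> Suc R \<and> heads c ! 3 \<le> Suc Lb"

abbreviation cf :: "nat \<Rightarrow> 'p::prime_card mod_ring \<Rightarrow> 'p mod_ring \<Rightarrow> nat \<Rightarrow> nat \<Rightarrow> nat \<Rightarrow> nat \<Rightarrow> nat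
   \<Rightarrow> (nat \<Rightarrow> 'p wsym) \<Rightarrow> (nat \<Rightarrow> 'p wsym) \<Rightarrow> (nat \<Rightarrow> 'p wsym) \<Rightarrow> (nat \<Rightarrow> 'p wsym) \<Rightarrow> 'p mod_ring list \<Rightarrow> 'p config" where
  "cf l u v i h0 h1 h2 h3 t0 t1 t2 t3 os \<equiv> \<lparr>cstate = enc l u v, ipos = i, heads = [h0,h1,h2,h3],
      tapes = [t0,t1,t2,t3], outp = os\<rparr>"

lemma okb_cf[simp]: "okb R Lb (cf l u v i h0 h1 h2 h3 t0 t1 t2 t3 os) \<longleftrightarrow> h0 \<le> Suc R \<and> h1 \<le> Suc R \<and> h2 \<le> Suc R \<and> h3 \<le> Suc Lb"
  unfolding okb_def by simp

lemmas stp = step_eq actf_def tp_upd_out tp_upd_same tp_upd_same2 tp_Suc tp_out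

lemma ph_copy:
  fixes x :: "bool list"
  shows "reach (okb R (length x)) x (cf 0 (0::'p::prime_card mod_ring) 0 0 0 0 0 0 (tp []) (tp []) (tp []) (tp []) [])
       (cf 4 0 0 (length x) 1 0 0 1 (tp []) (tp []) (tp []) (tp (map b2v x)) [])"
proof -
  let ?C = "\<lambda>j. cf 2 (0::'p mod_ring) 0 j 1 0 0 (Suc j) (tp []) (tp []) (tp []) (tp (map b2v (take j x))) []"
  have 1: "reach (okb R (length x)) x (?C 0) (?C (length x))"
  proof (rule chain_up)
    fix j assume j: "0 \<le> j" "j < length x"
    have "tp (map b2v (take j x)) (Suc j) = (None :: 'p wsym)" by (simp add: tp_out)
    moreover have "(tp (map b2v (take j x)))(Suc j := Some (b2v (x ! j))) = (tp (map b2v (take (Suc j) x)) :: nat \<Rightarrow> 'p wsym)"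
      using tp_app[of "map b2v (take j x)" "b2v (x ! j)"] j by (simp add: take_Suc_conv_app_nth)
    ultimately show "step MM x (?C j) = ?C (Suc j)" using j by (simp add: stp input_sym_def)
  qed auto
  let ?D = "\<lambda>j. cf 3 (0::'p mod_ring) 0 (length x) 1 0 0 j (tp []) (tp []) (tp []) (tp (map b2v x)) []"
  have 2: "reach (okb R (length x)) x (?D (length x)) (?D 0)"
  proof (rule chain_down)
    fix j assume j: "0 \<le> j" "j < length x"
    show "step MM x (?D (Suc j)) = ?D j" using j by (simp add: stp tp_Suc)
  qed auto
  show ?thesis
    apply (rule reach_one_trans[where c' = "?C 0"])
      apply simp
     apply (simp add: stp)
    apply (rule reach_trans[OF 1])
    apply (rule reach_one_trans[where c' = "?D (length x)"])
      apply simp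
     apply (simp add: stp input_sym_def)
    apply (rule reach_trans[OF 2])
    apply (rule reach_one)
      apply simp
     apply simp
    apply (simp add: stp)
    done
qed

section \<open>Phase 2: unary conversion by repeated decrement\<close>

fun bvl :: "'p::prime_card mod_ring list \<Rightarrow> nat" where
  "bvl [] = 0"
| "bvl (a # as) = (if a = 0 then 0 else 1) + 2 * bvl as"

lemma b2v_ne[simp]: "b2v True \<noteq> (0::'p::prime_card mod_ring)" "b2v False = (0::'p::prime_card mod_ring)"
  "b2v True = (1::'p::prime_card mod_ring)"
  unfolding b2v_def by auto

lemma bvl_bits: "bvl (map b2v (nat_bits r) :: 'p::prime_card mod_ring list) = r"
proof (induction r rule: nat_bits.induct)
  case (1 n)
  show ?case
  proof (cases "n = 0")
    case True thus ?thesis by (subst nat_bits.simps) (simp del: nat_bits.simps)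
  next
    case False
    have e: "nat_bits n = odd n # nat_bits (n div 2)" using False
      by (subst nat_bits.simps) (simp del: nat_bits.simps)
    have ih: "bvl (map b2v (nat_bits (n div 2)) :: 'p mod_ring list) = n div 2" using 1 False by blast
    have "bvl (map b2v (nat_bits n) :: 'p mod_ring list) = (if odd n then 1 else 0) + 2 * (n div 2)"
      unfolding e using ih by (cases "odd n") (simp_all del: nat_bits.simps)
    thus ?thesis by presburger
  qed
qed

lemma bits01: "set (map b2v bs) \<subseteq> {0, 1::'p::prime_card mod_ring}"
  unfolding b2v_def by auto

lemma bvl_rep: "bvl (replicate k 1 @ 0 # rest) + 1 = bvl (replicate k 0 @ (1::'p::prime_card mod_ring) # rest)"
  by (induction k) auto

lemma bvl_zero: "set bl \<subseteq> {0, 1::'p::prime_card mod_ring} \<Longrightarrow> bvl bl = 0 \<Longrightarrow> bl = replicate (length bl) 0"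
  by (induction bl) (auto split: if_splits)

lemma bvl_pos: "set bl \<subseteq> {0, 1::'p::prime_card mod_ring} \<Longrightarrow> bvl bl > 0 \<Longrightarrow>
    \<exists>k rest. bl = replicate k 0 @ 1 # rest"
proof (induction bl)
  case (Cons a bl)
  show ?case
  proof (cases "a = 0")
    case True
    with Cons obtain k rest where "bl = replicate k 0 @ 1 # rest" by auto
    with True have "a # bl = replicate (Suc k) 0 @ 1 # rest" by simp
    thus ?thesis by blast
  next
    case False
    hence "a = 1" using Cons.prems by auto
    hence "a # bl = replicate 0 0 @ 1 # bl" by simp
    thus ?thesis by blast
  qed
qed simp

lemma rep_upd: "j < k \<Longrightarrow> (replicate j a @ replicate (k - j) b @ ys)[j := a] = replicate (Suc j) a @ replicate (k - Suc j) b @ ys"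
proof -
  assume "j < k"
  hence "k - j = Suc (k - Suc j)" by simp
  hence "replicate (k - j) b = b # replicate (k - Suc j) b" by simp
  thus ?thesis by (simp add: list_update_append replicate_app_Cons_same)
qed

lemma rep_nth: "j < k \<Longrightarrow> (replicate j a @ replicate (k - j) b @ ys) ! j = b"
proof -
  assume "j < k"
  hence "k - j = Suc (k - Suc j)" by simp
  thus ?thesis by (simp add: nth_append)
qed

lemma dec_iter:
  fixes x :: "bool list" and u v :: "'p::prime_card mod_ring"
  assumes bl: "bl = replicate k 0 @ 1 # rest" and m: "Suc (Suc m) \<le> Suc R" and lb: "length bl \<le> Lb"
  shows "reach (okb R Lb) x (cf 4 u v I (Suc m) 0 0 1 (tp (replicate m 0)) T1 T2 (tp bl) os)
     (cf 4 u v I (Suc (Suc m)) 0 0 1 (tp (replicate (Suc m) 0)) T1 T2 (tp (replicate k 1 @ 0 # rest)) os)"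
proof -
  let ?C = "\<lambda>j. cf 4 u v I (Suc m) 0 0 (Suc j) (tp (replicate m 0)) T1 T2
        (tp (replicate j 1 @ replicate (k - j) 0 @ 1 # rest)) os"
  have len: "length bl = k + Suc (length rest)" using bl by simp
  have 1: "reach (okb R Lb) x (?C 0) (?C k)"
  proof (rule chain_up)
    fix j assume j: "0 \<le> j" "j < k"
    show "step MM x (?C j) = ?C (Suc j)" using j
      by (simp add: stp nth_append rep_nth tp_upd rep_upd)
  qed (use m lb len in auto)
  let ?D = "\<lambda>j. cf 5 u v I (Suc m) 0 0 j (tp (replicate m 0)) T1 T2 (tp (replicate k 1 @ 0 # rest)) os"
  have 2: "reach (okb R Lb) x (?D k) (?D 0)"
  proof (rule chain_down)
    fix j assume j: "0 \<le> j" "j < k"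
    show "step MM x (?D (Suc j)) = ?D j" using j by (simp add: stp nth_append)
  qed (use m lb len in auto)
  have e1: "step MM x (?C k) = ?D k"
    by (simp add: stp nth_append tp_upd list_update_append)
  have e2: "step MM x (?D 0) = cf 4 u v I (Suc (Suc m)) 0 0 1 (tp (replicate (Suc m) 0)) T1 T2 (tp (replicate k 1 @ 0 # rest)) os"
    using tp_app[of "replicate m (0::'p mod_ring)" 0] by (simp add: stp replicate_append_same)
  have eq0: "?C 0 = cf 4 u v I (Suc m) 0 0 1 (tp (replicate m 0)) T1 T2 (tp bl) os" using bl by simp
  have 3: "reach (okb R Lb) x (?C k) (?D k)" by (rule reach_one[OF _ _ e1]) (use m lb len in auto)
  have 4: "reach (okb R Lb) x (?D 0) (cf 4 u v I (Suc (Suc m)) 0 0 1 (tp (replicate (Suc m) 0)) T1 T2 (tp (replicate k 1 @ 0 # rest)) os)"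
    by (rule reach_one[OF _ _ e2]) (use m lb len in auto)
  show ?thesis using reach_trans[OF reach_trans[OF reach_trans[OF 1 3] 2] 4] unfolding eq0 .
qed


lemma dec_zero:
  fixes x :: "bool list" and u v :: "'p::prime_card mod_ring"
  assumes hF: "hF \<le> Suc R" and lb: "k \<le> Lb"
  shows "reach (okb R Lb) x (cf 4 u v I hF 0 0 1 TF T1 T2 (tp (replicate k 0)) os)
     (cf 6 u v I hF 0 0 (Suc k) TF T1 T2 (tp (replicate k 1)) os)"
proof -
  let ?C = "\<lambda>j. cf 4 u v I hF 0 0 (Suc j) TF T1 T2
        (tp (replicate j 1 @ replicate (k - j) 0 @ [])) os"
  have 1: "reach (okb R Lb) x (?C 0) (?C k)"
  proof (rule chain_up)
    fix j assume j: "0 \<le> j" "j < k"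
    show "step MM x (?C j) = ?C (Suc j)" using j
      by (simp add: stp nth_append rep_nth tp_upd rep_upd del: append_Nil2)
  qed (use hF lb in auto)
  have e: "step MM x (?C k) = cf 6 u v I hF 0 0 (Suc k) TF T1 T2 (tp (replicate k 1)) os"
    by (simp add: stp)
  have 2: "reach (okb R Lb) x (?C k) (cf 6 u v I hF 0 0 (Suc k) TF T1 T2 (tp (replicate k 1)) os)"
    by (rule reach_one[OF _ _ e]) (use hF lb in auto)
  show ?thesis using reach_trans[OF 1 2] by simp
qed

lemma dec_loop:
  fixes x :: "bool list" and u v :: "'p::prime_card mod_ring"
  shows "set bl \<subseteq> {0, 1::'p mod_ring} \<Longrightarrow> bvl bl = n \<Longrightarrow> m + n \<le> R \<Longrightarrow> length bl \<le> Lb \<Longrightarrow>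
    reach (okb R Lb) x (cf 4 u v I (Suc m) 0 0 1 (tp (replicate m 0)) T1 T2 (tp bl) os)
     (cf 6 u v I (Suc (m + n)) 0 0 (Suc (length bl)) (tp (replicate (m + n) 0)) T1 T2 (tp (replicate (length bl) 1)) os)"
proof (induction n arbitrary: bl m)
  case 0
  hence "bl = replicate (length bl) 0" using bvl_zero by blast
  then show ?case using dec_zero[of "Suc m" R "length bl" Lb x u v I "tp (replicate m 0)" T1 T2 os] 0
    by simp
next
  case (Suc n)
  then obtain k rest where bl: "bl = replicate k 0 @ 1 # rest" using bvl_pos[of bl] by auto
  let ?bl' = "replicate k 1 @ 0 # rest :: 'p mod_ring list"
  have 1: "reach (okb R Lb) x (cf 4 u v I (Suc m) 0 0 1 (tp (replicate m 0)) T1 T2 (tp bl) os)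
     (cf 4 u v I (Suc (Suc m)) 0 0 1 (tp (replicate (Suc m) 0)) T1 T2 (tp ?bl') os)"
    by (rule dec_iter[OF bl]) (use Suc.prems in auto)
  have b1: "bvl ?bl' + 1 = bvl bl" unfolding bl by (rule bvl_rep)
  have "set ?bl' \<subseteq> {0, 1}" using Suc.prems(1) unfolding bl by auto
  moreover have "bvl ?bl' = n" using b1 Suc.prems(2) by simp
  moreover have "Suc m + n \<le> R" using Suc.prems(3) by simp
  moreover have "length ?bl' \<le> Lb" using Suc.prems(4) bl by simp
  ultimately have 2: "reach (okb R Lb) x (cf 4 u v I (Suc (Suc m)) 0 0 1 (tp (replicate (Suc m) 0)) T1 T2 (tp ?bl') os)
     (cf 6 u v I (Suc (Suc m + n)) 0 0 (Suc (length ?bl')) (tp (replicate (Suc m + n) 0)) T1 T2 (tp (replicate (length ?bl') 1)) os)"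
    by (rule Suc.IH)
  have "length ?bl' = length bl" using bl by simp
  thus ?case using reach_trans[OF 1 2] by simp
qed

lemma main_init:
  fixes x :: "bool list" and u v :: "'p::prime_card mod_ring"
  assumes R: "R \<ge> 1" and HB: "HB \<le> Suc Lb"
  shows "reach (okb R Lb) x (cf 6 u v I (Suc R) 0 0 HB (tp (replicate R 0)) (tp []) (tp []) TB os)
     (cf 10 u v I 0 0 0 HB (tp (replicate R 0)) (tp [0]) (tp [0]) TB os)"
proof -
  let ?C = "\<lambda>j. cf 7 u v I j 0 0 HB (tp (replicate R 0)) (tp []) (tp []) TB os"
  have 1: "reach (okb R Lb) x (?C R) (?C 0)"
  proof (rule chain_down)
    fix j assume j: "0 \<le> j" "j < R"
    show "step MM x (?C (Suc j)) = ?C j" using j by (simp add: stp)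
  qed (use HB in auto)
  have e0: "step MM x (cf 6 u v I (Suc R) 0 0 HB (tp (replicate R 0)) (tp []) (tp []) TB os) = ?C R"
    by (simp add: stp)
  have e1: "step MM x (?C 0) = cf 8 u v I 0 1 1 HB (tp (replicate R 0)) (tp []) (tp []) TB os"
    by (simp add: stp)
  have e2: "step MM x (cf 8 u v I 0 1 1 HB (tp (replicate R 0)) (tp []) (tp []) TB os) =
       cf 10 u v I 0 0 0 HB (tp (replicate R 0)) (tp [0]) (tp [0]) TB os"
    using tp_app[of "[] :: 'p mod_ring list" 0] by (simp add: stp)
  show ?thesis
    apply (rule reach_one_trans[OF _ e0]) using HB apply simp
    apply (rule reach_trans[OF 1])
    apply (rule reach_one_trans[OF _ e1]) using HB apply simp
    apply (rule reach_one[OF _ _ e2]) using HB R by auto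
qed


definition pinit :: "nat \<Rightarrow> 'p::prime_card mod_ring list" where
  "pinit d = 1 # replicate (d - 1) 0"

lemma length_pinit[simp]: "d \<ge> 1 \<Longrightarrow> length (pinit d) = d" unfolding pinit_def by simp

lemma take_upd: "j < length A \<Longrightarrow> length A = length B \<Longrightarrow>
   (take j A @ drop j B)[j := A ! j] = take (Suc j) A @ drop (Suc j) B"
  by (simp add: list_update_append take_Suc_conv_app_nth upd_conv_take_nth_drop)

lemma take_nth: "j < length B \<Longrightarrow> j \<le> length A \<Longrightarrow> (take j A @ drop j B) ! j = B ! j"
  by (simp add: nth_append)

lemma take_len: "j \<le> length A \<Longrightarrow> length A = length B \<Longrightarrow> length (take j A @ drop j B) = length B"
  by simp

lemma tg_start:
  fixes x :: "bool list" and u v :: "'p::prime_card mod_ring"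
  assumes lf: "length fs = R" and dg: "length gs = d" and dp: "length ps = d" and d1: "1 \<le> d"
    and dR: "d \<le> R" and HB: "HB \<le> Suc Lb"
  shows "reach (okb R Lb) x (cf 10 u v I 0 0 0 HB (tp fs) (tp gs) (tp ps) TB os)
     (if d < R then cf 14 u v I R (Suc d) (Suc d) HB (tp fs) (tp gs) (tp (pinit d)) TB os
      else cf 30 u v I (Suc R) (Suc R) (Suc R) HB (tp fs) (tp gs) (tp (pinit d)) TB os)"
proof -
  let ?C = "\<lambda>j. cf 12 u v I (Suc j) (Suc j) (Suc j) HB (tp fs) (tp gs) (tp (take j (pinit d) @ drop j ps)) TB os"
  have e0: "step MM x (cf 10 u v I 0 0 0 HB (tp fs) (tp gs) (tp ps) TB os)
       = cf 11 u v I 1 1 1 HB (tp fs) (tp gs) (tp ps) TB os" by (simp add: stp)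
  have pu: "(tp ps)(Suc 0 := Some 1) = tp (take 1 (pinit d) @ drop 1 ps)"
  proof -
    obtain p0 ps' where "ps = p0 # ps'" using dp d1 by (cases ps) auto
    thus ?thesis using tp_upd[of 0 ps 1] by (simp add: pinit_def)
  qed
  have e1: "step MM x (cf 11 u v I 1 1 1 HB (tp fs) (tp gs) (tp ps) TB os) = ?C 1"
    using dg d1 dR lf by (simp add: stp tp_in pu)
  have 1: "reach (okb R Lb) x (?C 1) (?C d)"
  proof (rule chain_up)
    fix j assume j: "1 \<le> j" "j < d"
    have pn: "pinit d ! j = (0::'p mod_ring)" using j unfolding pinit_def by simp
    have u: "(tp (take j (pinit d) @ drop j ps))(Suc j := Some 0) = tp (take (Suc j) (pinit d) @ drop (Suc j) ps)"
      using tp_upd[of j "take j (pinit d) @ drop j ps" 0] take_upd[of j "pinit d" ps] j dp d1 pn by simp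
    show "step MM x (?C j) = ?C (Suc j)" using j dg dR lf dp d1 by (simp add: stp u)
  qed (use d1 dR HB in auto)
  have cd: "take d (pinit d) @ drop d ps = pinit d" using d1 dp by simp
  show ?thesis
  proof (cases "d < R")
    case True
    let ?D = "\<lambda>j. cf 13 u v I j (Suc d) (Suc d) HB (tp fs) (tp gs) (tp (pinit d)) TB os"
    have e2: "step MM x (?C d) = ?D (Suc (Suc d))" using True dg lf cd by (simp add: stp)
    have 2: "reach (okb R Lb) x (?D (Suc (Suc d))) (?D (Suc R))"
    proof (rule chain_up)
      fix j assume j: "Suc (Suc d) \<le> j" "j < Suc R"
      show "step MM x (?D j) = ?D (Suc j)" using j lf by (simp add: stp tp_in)
    qed (use True HB in auto)
    have e3: "step MM x (?D (Suc R)) = cf 14 u v I R (Suc d) (Suc d) HB (tp fs) (tp gs) (tp (pinit d)) TB os"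
      using lf by (simp add: stp)
    have "reach (okb R Lb) x (cf 10 u v I 0 0 0 HB (tp fs) (tp gs) (tp ps) TB os)
         (cf 14 u v I R (Suc d) (Suc d) HB (tp fs) (tp gs) (tp (pinit d)) TB os)"
      apply (rule reach_one_trans[OF _ e0]) using HB apply simp
      apply (rule reach_one_trans[OF _ e1]) using dR HB apply simp
      apply (rule reach_trans[OF 1])
      apply (rule reach_one_trans[OF _ e2]) using dR HB apply simp
      apply (rule reach_trans[OF 2])
      apply (rule reach_one[OF _ _ e3]) using dR HB True by auto
    thus ?thesis using True by simp
  next
    case False
    hence dR': "d = R" using dR by simp
    have e2: "step MM x (?C d) = cf 30 u v I (Suc R) (Suc R) (Suc R) HB (tp fs) (tp gs) (tp (pinit d)) TB os"
      using dR' dg lf cd by (simp add: stp)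
    have "reach (okb R Lb) x (cf 10 u v I 0 0 0 HB (tp fs) (tp gs) (tp ps) TB os)
         (cf 30 u v I (Suc R) (Suc R) (Suc R) HB (tp fs) (tp gs) (tp (pinit d)) TB os)"
      apply (rule reach_one_trans[OF _ e0]) using HB apply simp
      apply (rule reach_one_trans[OF _ e1]) using dR HB apply simp
      apply (rule reach_trans[OF 1])
      apply (rule reach_one[OF _ _ e2]) using dR HB by auto
    thus ?thesis using False by simp
  qed
qed

definition hstep :: "'p::prime_card mod_ring \<Rightarrow> 'p mod_ring \<Rightarrow> 'p mod_ring list \<Rightarrow> 'p mod_ring list \<Rightarrow> 'p mod_ring list" where
  "hstep c a ps gs = map (\<lambda>i. (if i = 0 then a else ps ! (i - 1)) - c * gs ! i) [0..<length ps]"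

lemma hstep_len[simp]: "length (hstep c a ps gs) = length ps" unfolding hstep_def by simp
lemma hstep_nth: "j < length ps \<Longrightarrow> hstep c a ps gs ! j = (if j = 0 then a else ps ! (j - 1)) - c * gs ! j"
  unfolding hstep_def by simp

definition crr :: "'p::prime_card mod_ring \<Rightarrow> 'p mod_ring list \<Rightarrow> nat \<Rightarrow> 'p mod_ring" where
  "crr a ps j = (if j = 0 then a else ps ! (j - 1))"
lemma crr_0[simp]: "crr a ps 0 = a" unfolding crr_def by simp
lemma crr_Suc[simp]: "crr a ps (Suc j) = ps ! j" unfolding crr_def by simp

lemma horner_iter:
  fixes x :: "bool list" and u v :: "'p::prime_card mod_ring"
  assumes lf: "length fs = R" and dg: "length gs = d" and dp: "length ps = d" and d1: "1 \<le> d"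
    and dR: "d < R" and k: "1 \<le> k" "k \<le> R" and HB: "HB \<le> Suc Lb"
  shows "reach (okb R Lb) x (cf 14 u v I k (Suc d) (Suc d) HB (tp fs) (tp gs) (tp ps) TB os)
     (cf 14 (ps ! (d - 1)) (ps ! (d - 1)) I (k - 1) (Suc d) (Suc d) HB (tp fs) (tp gs)
        (tp (hstep (ps ! (d - 1)) (fs ! (k - 1)) ps gs)) TB os)"
proof -
  define a where "a = fs ! (k - 1)"
  define c where "c = ps ! (d - 1)"
  let ?a = a and ?c = c
  let ?H = "hstep ?c ?a ps gs"
  have e0: "step MM x (cf 14 u v I k (Suc d) (Suc d) HB (tp fs) (tp gs) (tp ps) TB os)
     = cf 15 u ?a I k d d HB (tp fs) (tp gs) (tp ps) TB os" using k lf by (simp add: stp tp_in a_def)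
  have e1: "step MM x (cf 15 u ?a I k d d HB (tp fs) (tp gs) (tp ps) TB os)
     = cf 16 ?c ?a I k (d - 1) (d - 1) HB (tp fs) (tp gs) (tp ps) TB os"
    using d1 dp by (simp add: stp tp_in valo_def c_def)
  let ?D = "\<lambda>j. cf 16 ?c ?a I k j j HB (tp fs) (tp gs) (tp ps) TB os"
  have 1: "reach (okb R Lb) x (?D (d - 1)) (?D 0)"
  proof (rule chain_down)
    fix j assume j: "0 \<le> j" "j < d - 1"
    show "step MM x (?D (Suc j)) = ?D j" using j dg dp by (simp add: stp)
  qed (use k dR HB in auto)
  let ?C = "\<lambda>j. cf 17 ?c (crr ?a ps j) I k (Suc j) (Suc j) HB (tp fs) (tp gs)
        (tp (take j ?H @ drop j ps)) TB os"
  have e2: "step MM x (?D 0) = ?C 0" by (simp add: stp)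
  have 2: "reach (okb R Lb) x (?C 0) (?C d)"
  proof (rule chain_up)
    fix j assume j: "0 \<le> j" "j < d"
    have hn: "?H ! j = crr ?a ps j - ?c * gs ! j" using j dp by (simp add: hstep_nth crr_def)
    have u: "(tp (take j ?H @ drop j ps))(Suc j := Some (crr ?a ps j - ?c * gs ! j))
       = tp (take (Suc j) ?H @ drop (Suc j) ps)"
      using tp_upd[of j "take j ?H @ drop j ps" "?H ! j"] take_upd[of j ?H ps] j dp by (simp only: hn) simp
    have rd: "(take j ?H @ drop j ps) ! j = ps ! j"
      using j dp by (simp add: nth_append)
    show "step MM x (?C j) = ?C (Suc j)" using j dg dp
      by (simp add: stp rd u valo_def)
  qed (use k dR HB in auto)
  have cd: "take d ?H @ drop d ps = ?H" using dp by simp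
  have e3: "step MM x (?C d) = cf 14 ?c ?c I (k - 1) (Suc d) (Suc d) HB (tp fs) (tp gs) (tp ?H) TB os"
    using dg dp d1 cd by (simp add: stp crr_def c_def)
  show ?thesis
    unfolding a_def[symmetric] c_def[symmetric]
    apply (rule reach_one_trans[OF _ e0]) using k dR HB apply simp
    apply (rule reach_one_trans[OF _ e1]) using k dR HB apply simp
    apply (rule reach_trans[OF 1])
    apply (rule reach_one_trans[OF _ e2]) using k dR HB apply simp
    apply (rule reach_trans[OF 2])
    apply (rule reach_one[OF _ _ e3]) using k dR HB by auto
qed


lemma horner_end:
  fixes x :: "bool list" and u v :: "'p::prime_card mod_ring"
  assumes dR: "d < R" and HB: "HB \<le> Suc Lb"
  shows "reach (okb R Lb) x (cf 14 u v I 0 (Suc d) (Suc d) HB (tp fs) T1 T2 TB os)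
     (cf 21 u v I 0 d d HB (tp fs) T1 T2 TB os)"
proof -
  have e0: "step MM x (cf 14 u v I 0 (Suc d) (Suc d) HB (tp fs) T1 T2 TB os) = cf 20 u v I 0 (Suc d) (Suc d) HB (tp fs) T1 T2 TB os"
    by (simp add: stp)
  have e1: "step MM x (cf 20 u v I 0 (Suc d) (Suc d) HB (tp fs) T1 T2 TB os) = cf 21 u v I 0 d d HB (tp fs) T1 T2 TB os"
    by (simp add: stp)
  show ?thesis
    apply (rule reach_one_trans[OF _ e0]) using dR HB apply simp
    apply (rule reach_one[OF _ _ e1]) using dR HB by auto
qed

lemma z_zero:
  fixes x :: "bool list" and u v :: "'p::prime_card mod_ring"
  assumes dR: "d \<le> R" and HB: "HB \<le> Suc Lb" and dg: "length gs = d" and dp: "length ps = d"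
  shows "j \<le> d \<Longrightarrow> (\<forall>i<j. ps ! i = 0) \<Longrightarrow> reach (okb R Lb) x (cf 21 u v I 0 j j HB TF (tp gs) (tp ps) TB os)
     (cf 25 u v I 0 0 0 HB TF (tp gs) (tp ps) TB os)"
proof (induction j)
  case 0
  have e: "step MM x (cf 21 u v I 0 0 0 HB TF (tp gs) (tp ps) TB os) = cf 25 u v I 0 0 0 HB TF (tp gs) (tp ps) TB os"
    by (simp add: stp)
  show ?case by (rule reach_one[OF _ _ e]) (use dR HB in auto)
next
  case (Suc j)
  have e: "step MM x (cf 21 u v I 0 (Suc j) (Suc j) HB TF (tp gs) (tp ps) TB os) = cf 21 u v I 0 j j HB TF (tp gs) (tp ps) TB os"
    using Suc.prems dg dp by (simp add: stp)
  show ?case by (rule reach_one_trans[OF _ e]) (use Suc dR HB in auto)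
qed

lemma z_nonzero:
  fixes x :: "bool list" and u v :: "'p::prime_card mod_ring"
  assumes dR: "d \<le> R" and HB: "HB \<le> Suc Lb" and dg: "length gs = d" and dp: "length ps = d"
  shows "j \<le> d \<Longrightarrow> \<not> (\<forall>i<j. ps ! i = 0) \<Longrightarrow> \<exists>c. 1 \<le> c \<and> c \<le> j \<and>
     reach (okb R Lb) x (cf 21 u v I 0 j j HB TF (tp gs) (tp ps) TB os)
     (cf 22 u v I 0 c c HB TF (tp gs) (tp ps) TB os)"
proof (induction j)
  case 0 thus ?case by simp
next
  case (Suc j)
  show ?case
  proof (cases "ps ! j = 0")
    case True
    hence "\<not> (\<forall>i<j. ps ! i = 0)" using Suc.prems(2) less_Suc_eq by auto
    then obtain c where c: "1 \<le> c" "c \<le> j" "reach (okb R Lb) x (cf 21 u v I 0 j j HB TF (tp gs) (tp ps) TB os)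
     (cf 22 u v I 0 c c HB TF (tp gs) (tp ps) TB os)" using Suc by auto
    have e: "step MM x (cf 21 u v I 0 (Suc j) (Suc j) HB TF (tp gs) (tp ps) TB os) = cf 21 u v I 0 j j HB TF (tp gs) (tp ps) TB os"
      using Suc.prems dg dp True by (simp add: stp)
    have "reach (okb R Lb) x (cf 21 u v I 0 (Suc j) (Suc j) HB TF (tp gs) (tp ps) TB os)
     (cf 22 u v I 0 c c HB TF (tp gs) (tp ps) TB os)"
      by (rule reach_one_trans[OF _ e c(3)]) (use Suc dR HB in auto)
    thus ?thesis using c by auto
  next
    case False
    have e: "step MM x (cf 21 u v I 0 (Suc j) (Suc j) HB TF (tp gs) (tp ps) TB os) = cf 22 u v I 0 (Suc j) (Suc j) HB TF (tp gs) (tp ps) TB os"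
      using Suc.prems dg dp False by (simp add: stp)
    have "reach (okb R Lb) x (cf 21 u v I 0 (Suc j) (Suc j) HB TF (tp gs) (tp ps) TB os)
     (cf 22 u v I 0 (Suc j) (Suc j) HB TF (tp gs) (tp ps) TB os)"
      by (rule reach_one[OF _ _ e]) (use Suc dR HB in auto)
    thus ?thesis by auto
  qed
qed

lemma z22:
  fixes x :: "bool list" and u v :: "'p::prime_card mod_ring"
  assumes dR: "d \<le> R" and HB: "HB \<le> Suc Lb" and dg: "length gs = d" and c: "c \<le> d"
  shows "reach (okb R Lb) x (cf 22 u v I 0 c c HB TF (tp gs) TP TB os) (cf 23 u v I 0 1 1 HB TF (tp gs) TP TB os)"
proof -
  let ?D = "\<lambda>j. cf 22 u v I 0 j j HB TF (tp gs) TP TB os"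
  have 1: "reach (okb R Lb) x (?D c) (?D 0)"
  proof (rule chain_down)
    fix j assume j: "0 \<le> j" "j < c"
    show "step MM x (?D (Suc j)) = ?D j" using j dg c by (simp add: stp)
  qed (use c dR HB in auto)
  have e: "step MM x (?D 0) = cf 23 u v I 0 1 1 HB TF (tp gs) TP TB os" by (simp add: stp)
  show ?thesis by (rule reach_trans[OF 1 reach_one[OF _ _ e]]) (use dR HB in auto)
qed

lemma back24:
  fixes x :: "bool list" and u v :: "'p::prime_card mod_ring"
  assumes dR: "c \<le> Suc R" and HB: "HB \<le> Suc Lb" and dg: "c \<le> length gs"
  shows "reach (okb R Lb) x (cf 24 u v I 0 c c HB TF (tp gs) TP TB os) (cf 10 u v I 0 0 0 HB TF (tp gs) TP TB os)"
proof -
  let ?D = "\<lambda>j. cf 24 u v I 0 j j HB TF (tp gs) TP TB os"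
  have 1: "reach (okb R Lb) x (?D c) (?D 0)"
  proof (rule chain_down)
    fix j assume j: "0 \<le> j" "j < c"
    show "step MM x (?D (Suc j)) = ?D j" using j dg by (simp add: stp)
  qed (use dR HB in auto)
  have e: "step MM x (?D 0) = cf 10 u v I 0 0 0 HB TF (tp gs) TP TB os" by (simp add: stp)
  show ?thesis by (rule reach_trans[OF 1 reach_one[OF _ _ e]]) (use dR HB in auto)
qed

lemma incg_a:
  fixes x :: "bool list" and u v :: "'p::prime_card mod_ring"
  assumes gs: "gs = replicate k (-1) @ cc # rest" and cc: "cc + 1 \<noteq> 0"
    and dR: "length gs \<le> R" and HB: "HB \<le> Suc Lb"
  shows "reach (okb R Lb) x (cf 23 u v I 0 1 1 HB TF (tp gs) TP TB os)
    (cf 10 u v I 0 0 0 HB TF (tp (replicate k 0 @ (cc + 1) # rest)) TP TB os)"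
proof -
  let ?C = "\<lambda>j. cf 23 u v I 0 (Suc j) (Suc j) HB TF (tp (replicate j 0 @ replicate (k - j) (-1) @ cc # rest)) TP TB os"
  have 1: "reach (okb R Lb) x (?C 0) (?C k)"
  proof (rule chain_up)
    fix j assume j: "0 \<le> j" "j < k"
    show "step MM x (?C j) = ?C (Suc j)" using j
      by (simp add: stp nth_append rep_nth tp_upd rep_upd)
  qed (use dR HB gs in auto)
  have e: "step MM x (?C k) = cf 24 u v I 0 k k HB TF (tp (replicate k 0 @ (cc + 1) # rest)) TP TB os"
    using cc by (simp add: stp nth_append tp_upd list_update_append)
  have 2: "reach (okb R Lb) x (cf 24 u v I 0 k k HB TF (tp (replicate k 0 @ (cc + 1) # rest)) TP TB os)
    (cf 10 u v I 0 0 0 HB TF (tp (replicate k 0 @ (cc + 1) # rest)) TP TB os)"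
    by (rule back24) (use dR HB gs in auto)
  have c0: "?C 0 = cf 23 u v I 0 1 1 HB TF (tp gs) TP TB os" using gs by simp
  show ?thesis using reach_trans[OF 1 reach_one_trans[OF _ e 2]] dR HB gs unfolding c0 by simp
qed

lemma incg_b:
  fixes x :: "bool list" and u v :: "'p::prime_card mod_ring"
  assumes gs: "gs = replicate k (-1)" and dp: "length ps = k"
    and dR: "k < R" and HB: "HB \<le> Suc Lb"
  shows "reach (okb R Lb) x (cf 23 u v I 0 1 1 HB TF (tp gs) (tp ps) TB os)
    (cf 10 u v I 0 0 0 HB TF (tp (replicate (Suc k) 0)) (tp (ps @ [0])) TB os)"
proof -
  let ?C = "\<lambda>j. cf 23 u v I 0 (Suc j) (Suc j) HB TF (tp (replicate j 0 @ replicate (k - j) (-1) @ [])) (tp ps) TB os"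
  have 1: "reach (okb R Lb) x (?C 0) (?C k)"
  proof (rule chain_up)
    fix j assume j: "0 \<le> j" "j < k"
    show "step MM x (?C j) = ?C (Suc j)" using j
      by (simp add: stp nth_append rep_nth tp_upd rep_upd del: append_Nil2)
  qed (use dR HB gs in auto)
  have e: "step MM x (?C k) = cf 24 u v I 0 k k HB TF (tp (replicate (Suc k) 0)) (tp (ps @ [0])) TB os"
    using tp_app[of "replicate k (0::'p mod_ring)" 0] tp_app[of ps 0] dp
    by (simp add: stp replicate_append_same)
  have 2: "reach (okb R Lb) x (cf 24 u v I 0 k k HB TF (tp (replicate (Suc k) 0)) (tp (ps @ [0])) TB os)
    (cf 10 u v I 0 0 0 HB TF (tp (replicate (Suc k) 0)) (tp (ps @ [0])) TB os)"
    by (rule back24) (use dR HB in auto)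
  have c0: "?C 0 = cf 23 u v I 0 1 1 HB TF (tp gs) (tp ps) TB os" using gs by simp
  show ?thesis using reach_trans[OF 1 reach_one_trans[OF _ e 2]] dR HB gs unfolding c0 by simp
qed

lemma incf:
  fixes x :: "bool list" and u v :: "'p::prime_card mod_ring"
  assumes fs: "fs = replicate k (-1) @ cc # rest" and cc: "cc + 1 \<noteq> 0"
    and lf: "length fs = R" and dg: "length gs = d" and dp: "length ps = d" and dR: "d \<le> R" and HB: "HB \<le> Suc Lb"
  shows "reach (okb R Lb) x (cf 25 u v I 0 0 0 HB (tp fs) (tp gs) (tp ps) TB os)
    (cf 10 u v I 0 0 0 HB (tp (replicate k 0 @ (cc + 1) # rest)) (tp [0]) (tp [0]) TB os)"
proof -
  let ?f' = "replicate k 0 @ (cc + 1) # rest"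
  let ?C = "\<lambda>j. cf 26 u v I (Suc j) 0 0 HB (tp (replicate j 0 @ replicate (k - j) (-1) @ cc # rest)) (tp gs) (tp ps) TB os"
  have e0: "step MM x (cf 25 u v I 0 0 0 HB (tp fs) (tp gs) (tp ps) TB os) = ?C 0" using fs by (simp add: stp)
  have 1: "reach (okb R Lb) x (?C 0) (?C k)"
  proof (rule chain_up)
    fix j assume j: "0 \<le> j" "j < k"
    show "step MM x (?C j) = ?C (Suc j)" using j
      by (simp add: stp nth_append rep_nth tp_upd rep_upd)
  qed (use lf HB fs dR in auto)
  let ?D = "\<lambda>j. cf 27 u v I j 0 0 HB (tp ?f') (tp gs) (tp ps) TB os"
  have e1: "step MM x (?C k) = ?D k"
    using cc by (simp add: stp nth_append tp_upd list_update_append)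
  have 2: "reach (okb R Lb) x (?D k) (?D 0)"
  proof (rule chain_down)
    fix j assume j: "0 \<le> j" "j < k"
    show "step MM x (?D (Suc j)) = ?D j" using j by (simp add: stp nth_append)
  qed (use lf HB fs dR in auto)
  have e2: "step MM x (?D 0) = cf 28 u v I 0 0 0 HB (tp ?f') (tp gs) (tp ps) TB os" by (simp add: stp)
  have e3: "step MM x (cf 28 u v I 0 0 0 HB (tp ?f') (tp gs) (tp ps) TB os) = cf 29 u v I 0 1 1 HB (tp ?f') (tp gs) (tp ps) TB os"
    by (simp add: stp)
  let ?E = "\<lambda>j. cf 29 u v I 0 j j HB (tp ?f') (tp gs) (tp ps) TB os"
  have 3: "reach (okb R Lb) x (?E 1) (?E (Suc d))"
  proof (rule chain_up)
    fix j assume j: "1 \<le> j" "j < Suc d"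
    show "step MM x (?E j) = ?E (Suc j)" using j dg dp by (simp add: stp tp_in)
  qed (use lf HB fs dR in auto)
  let ?G = "\<lambda>j. cf 31 u v I 0 j j HB (tp ?f') (tp (take j gs)) (tp (take j ps)) TB os"
  have e4: "step MM x (?E (Suc d)) = ?G d" using dg dp by (simp add: stp)
  have 4: "reach (okb R Lb) x (?G d) (?G 0)"
  proof (rule chain_down)
    fix j assume j: "0 \<le> j" "j < d"
    have ne: "gs \<noteq> []" "ps \<noteq> []" using j dg dp by auto
    have g: "(tp (take (Suc j) gs))(Suc j := None) = tp (take j gs)"
      using tp_del[of "take (Suc j) gs"] j dg ne by (simp add: butlast_take)
    have p: "(tp (take (Suc j) ps))(Suc j := None) = tp (take j ps)"
      using tp_del[of "take (Suc j) ps"] j dp ne by (simp add: butlast_take)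
    show "step MM x (?G (Suc j)) = ?G j" using j dg dp by (simp add: stp tp_in g p)
  qed (use lf HB fs dR in auto)
  have e5: "step MM x (?G 0) = cf 8 u v I 0 1 1 HB (tp ?f') (tp []) (tp []) TB os" by (simp add: stp)
  have e6: "step MM x (cf 8 u v I 0 1 1 HB (tp ?f') (tp []) (tp []) TB os) = cf 10 u v I 0 0 0 HB (tp ?f') (tp [0]) (tp [0]) TB os"
    using tp_app[of "[] :: 'p mod_ring list" 0] by (simp add: stp)
  have gd: "?G d = cf 31 u v I 0 d d HB (tp ?f') (tp gs) (tp ps) TB os" using dg dp by simp
  show ?thesis
    apply (rule reach_one_trans[OF _ e0]) using HB apply simp
    apply (rule reach_trans[OF 1])
    apply (rule reach_one_trans[OF _ e1]) using HB lf fs dR apply simp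
    apply (rule reach_trans[OF 2])
    apply (rule reach_one_trans[OF _ e2]) using HB apply simp
    apply (rule reach_one_trans[OF _ e3]) using HB apply simp
    apply (rule reach_trans[OF 3])
    apply (rule reach_one_trans[OF _ e4]) using HB dR apply simp
    apply (rule reach_trans[OF 4])
    apply (rule reach_one_trans[OF _ e5]) using HB apply simp
    apply (rule reach_one[OF _ _ e6]) using HB dR lf by auto
qed

lemma outp_phase:
  fixes x :: "bool list" and u v :: "'p::prime_card mod_ring"
  assumes lf: "length fs = R" and HB: "HB \<le> Suc Lb"
  shows "reach (okb R Lb) x (cf 30 u v I (Suc R) (Suc R) (Suc R) HB (tp fs) T1 T2 TB os)
     (cf 1 0 0 I (Suc R) (Suc R) (Suc R) HB (tp fs) T1 T2 TB (os @ fs @ [1]))"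
proof -
  let ?D = "\<lambda>j. cf 32 u v I j (Suc R) (Suc R) HB (tp fs) T1 T2 TB os"
  have e0: "step MM x (cf 30 u v I (Suc R) (Suc R) (Suc R) HB (tp fs) T1 T2 TB os) = ?D R" by (simp add: stp)
  have 1: "reach (okb R Lb) x (?D R) (?D 0)"
  proof (rule chain_down)
    fix j assume j: "0 \<le> j" "j < R"
    show "step MM x (?D (Suc j)) = ?D j" using j lf by (simp add: stp)
  qed (use HB in auto)
  let ?C = "\<lambda>j. cf 33 u v I (Suc j) (Suc R) (Suc R) HB (tp fs) T1 T2 TB (os @ take j fs)"
  have e1: "step MM x (?D 0) = ?C 0" by (simp add: stp)
  have 2: "reach (okb R Lb) x (?C 0) (?C R)"
  proof (rule chain_up)
    fix j assume j: "0 \<le> j" "j < R"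
    show "step MM x (?C j) = ?C (Suc j)" using j lf by (simp add: stp take_Suc_conv_app_nth)
  qed (use HB in auto)
  have e2: "step MM x (?C R) = cf 1 0 0 I (Suc R) (Suc R) (Suc R) HB (tp fs) T1 T2 TB (os @ fs @ [1])"
    using lf by (simp add: stp)
  show ?thesis
    apply (rule reach_one_trans[OF _ e0]) using HB apply simp
    apply (rule reach_trans[OF 1])
    apply (rule reach_one_trans[OF _ e1]) using HB apply simp
    apply (rule reach_trans[OF 2])
    apply (rule reach_one[OF _ _ e2]) using HB by auto
qed


definition gpoly :: "'p::prime_card mod_ring list \<Rightarrow> 'p mod_ring poly" where
  "gpoly gs = Poly (gs @ [1])"

lemma coeff_gpoly: "coeff (gpoly gs) n = (if n < length gs then gs ! n else if n = length gs then 1 else 0)"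
  unfolding gpoly_def by (simp add: nth_default_def nth_append)

lemma degree_gpoly[simp]: "degree (gpoly gs) = length gs"
proof (rule antisym)
  show "degree (gpoly gs) \<le> length gs" by (rule degree_le) (simp add: coeff_gpoly)
  show "length gs \<le> degree (gpoly gs)" by (rule le_degree) (simp add: coeff_gpoly)
qed

lemma lead_gpoly[simp]: "lead_coeff (gpoly gs) = 1" by (simp add: coeff_gpoly)

lemma coeffs_gpoly: "coeffs (gpoly gs) = gs @ [1]"
  unfolding gpoly_def by simp

lemma hstep_poly:
  assumes dp: "length ps = d" and dg: "length gs = d" and d1: "1 \<le> d"
  shows "Poly (hstep (ps ! (d - 1)) a ps gs) = pCons a (Poly ps) - smult (ps ! (d - 1)) (gpoly gs)"
proof (rule poly_eqI)
  fix n
  let ?c = "ps ! (d - 1)"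
  show "coeff (Poly (hstep ?c a ps gs)) n = coeff (pCons a (Poly ps) - smult ?c (gpoly gs)) n"
  proof (cases "n < d")
    case True
    thus ?thesis using dp dg by (cases n) (auto simp: nth_default_def hstep_nth coeff_gpoly)
  next
    case False
    show ?thesis
    proof (cases "n = d")
      case True
      obtain m where nm: "n = Suc m" using d1 True by (cases n) auto
      hence m: "m = d - 1" "m < length ps" using True dp by auto
      have "coeff (pCons a (Poly ps)) n = ps ! (d - 1)" unfolding nm using m by (simp add: nth_default_def)
      moreover have "coeff (Poly (hstep ?c a ps gs)) n = 0" using True dp by (simp add: nth_default_def)
      moreover have "coeff (gpoly gs) n = 1" using True dg by (simp add: coeff_gpoly)
      ultimately show ?thesis by simp
    next
      case False
      hence "n > d" using \<open>\<not> n < d\<close> by simp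
      then obtain m where "n = Suc m" "m \<ge> d" by (cases n) auto
      thus ?thesis using \<open>n > d\<close> dp dg d1 by (auto simp: nth_default_def coeff_gpoly)
    qed
  qed
qed

lemma horner_inv_step:
  assumes k: "k < length fs" and dp: "length ps = d" and dg: "length gs = d" and d1: "1 \<le> d"
    and inv: "gpoly gs dvd Poly (drop (Suc k) fs @ [1]) - Poly ps"
  shows "gpoly gs dvd Poly (drop k fs @ [1]) - Poly (hstep (ps ! (d - 1)) (fs ! k) ps gs)"
proof -
  have dk: "drop k fs = fs ! k # drop (Suc k) fs" using k by (simp add: Cons_nth_drop_Suc)
  let ?A = "Poly (drop (Suc k) fs @ [1])" and ?c = "ps ! (d - 1)"
  have p1: "Poly (drop k fs @ [1]) = pCons (fs ! k) ?A" unfolding dk by simp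
  have r: "pCons a X - (pCons a Y - Z) = pCons 0 (X - Y) + Z" for a :: "'a mod_ring" and X Y Z
  proof -
    have "pCons a X - (pCons a Y - Z) = (pCons a X - pCons a Y) + Z" by (simp only: diff_diff_eq2 add_diff_eq[symmetric] diff_add_eq)
    also have "pCons a X - pCons a Y = pCons 0 (X - Y)" by (simp only: diff_pCons diff_self)
    finally show ?thesis .
  qed
  have "Poly (drop k fs @ [1]) - Poly (hstep ?c (fs ! k) ps gs) =
        pCons 0 (?A - Poly ps) + smult ?c (gpoly gs)"
    unfolding hstep_poly[OF dp dg d1] p1 by (rule r)
  also have "\<dots> = [:0, 1:] * (?A - Poly ps) + smult ?c (gpoly gs)" by (subst pCons_0_as_mult) (rule refl)
  finally have e: "Poly (drop k fs @ [1]) - Poly (hstep ?c (fs ! k) ps gs) = [:0, 1:] * (?A - Poly ps) + smult ?c (gpoly gs)" .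
  have "gpoly gs dvd [:0,1:] * (?A - Poly ps)" using inv by (rule dvd_mult)
  moreover have "gpoly gs dvd smult ?c (gpoly gs)" by (rule dvd_smult) simp
  ultimately have "gpoly gs dvd ([:0,1:] * (?A - Poly ps) + smult ?c (gpoly gs))" by (rule dvd_add)
  thus ?thesis unfolding e .
qed

lemma deg_Poly_lt: assumes "length ps = d" "1 \<le> d" shows "degree (Poly ps) < d"
proof -
  have "degree (Poly ps) \<le> d - 1" by (rule degree_le) (use assms in \<open>auto simp: nth_default_def\<close>)
  thus ?thesis using assms by simp
qed

lemma gdiv:
  assumes dp: "length ps = d" and dg: "length gs = d" and d1: "1 \<le> d"
    and inv: "gpoly gs dvd F - Poly ps"
  shows "gpoly gs dvd F \<longleftrightarrow> (\<forall>i<d. ps ! i = 0)"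
proof
  assume "\<forall>i<d. ps ! i = 0"
  hence "ps = replicate d 0" using dp by (simp add: list_eq_iff_nth_eq)
  hence "Poly ps = 0" by simp
  thus "gpoly gs dvd F" using inv by simp
next
  assume g: "gpoly gs dvd F"
  have "gpoly gs dvd F - (F - Poly ps)" using g inv by (rule dvd_diff)
  hence gd: "gpoly gs dvd Poly ps" by simp
  have "Poly ps = 0"
  proof (rule ccontr)
    assume "Poly ps \<noteq> 0"
    hence "degree (gpoly gs) \<le> degree (Poly ps)" using gd by (rule dvd_imp_degree_le[rotated])
    thus False using deg_Poly_lt[OF dp d1] dg by simp
  qed
  then obtain n where "ps = replicate n 0" by (auto simp: Poly_eq_0)
  thus "\<forall>i<d. ps ! i = 0" using dp by auto
qed

lemma Poly_pinit: "d \<ge> 1 \<Longrightarrow> Poly (pinit d :: 'p::prime_card mod_ring list) = 1"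
proof -
  have "Poly (pinit d :: 'p::prime_card mod_ring list) = [:1:]" by (simp add: pinit_def)
  thus ?thesis by (simp only: one_pCons[symmetric])
qed


lemma horner_loop:
  fixes x :: "bool list" and u v :: "'p::prime_card mod_ring"
  assumes lf: "length fs = R" and dg: "length gs = d" and d1: "1 \<le> d" and dR: "d < R" and HB: "HB \<le> Suc Lb"
  shows "k \<le> R \<Longrightarrow> length ps = d \<Longrightarrow> gpoly gs dvd Poly (drop k fs @ [1]) - Poly ps \<Longrightarrow>
    \<exists>u' v' ps'. length ps' = d \<and> gpoly gs dvd Poly (fs @ [1]) - Poly ps' \<and>
      reach (okb R Lb) x (cf 14 u v I k (Suc d) (Suc d) HB (tp fs) (tp gs) (tp ps) TB os)
        (cf 14 u' v' I 0 (Suc d) (Suc d) HB (tp fs) (tp gs) (tp ps') TB os)"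
proof (induction k arbitrary: ps u v)
  case 0
  have "reach (okb R Lb) x (cf 14 u v I 0 (Suc d) (Suc d) HB (tp fs) (tp gs) (tp ps) TB os)
        (cf 14 u v I 0 (Suc d) (Suc d) HB (tp fs) (tp gs) (tp ps) TB os)"
    by (rule reach_refl) (use dR HB in simp)
  thus ?case using 0 by auto
next
  case (Suc k)
  let ?ps1 = "hstep (ps ! (d - 1)) (fs ! k) ps gs"
  have 1: "reach (okb R Lb) x (cf 14 u v I (Suc k) (Suc d) (Suc d) HB (tp fs) (tp gs) (tp ps) TB os)
     (cf 14 (ps ! (d - 1)) (ps ! (d - 1)) I k (Suc d) (Suc d) HB (tp fs) (tp gs) (tp ?ps1) TB os)"
    using horner_iter[OF lf dg Suc.prems(2) d1 dR _ _ HB, of "Suc k" x u v I TB os] Suc.prems by simp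
  have inv: "gpoly gs dvd Poly (drop k fs @ [1]) - Poly ?ps1"
    by (rule horner_inv_step) (use Suc.prems lf dg d1 in auto)
  obtain u' v' ps' where "length ps' = d" "gpoly gs dvd Poly (fs @ [1]) - Poly ps'"
    "reach (okb R Lb) x (cf 14 (ps ! (d - 1)) (ps ! (d - 1)) I k (Suc d) (Suc d) HB (tp fs) (tp gs) (tp ?ps1) TB os)
        (cf 14 u' v' I 0 (Suc d) (Suc d) HB (tp fs) (tp gs) (tp ps') TB os)"
    using Suc.IH[of ?ps1 "ps ! (d - 1)" "ps ! (d - 1)"] Suc.prems inv by auto
  then show ?case using reach_trans[OF 1] by blast
qed

fun inc :: "'p::prime_card mod_ring list \<Rightarrow> 'p mod_ring list" where
  "inc [] = [0]"
| "inc (a # as) = (if a + 1 = 0 then 0 # inc as else (a + 1) # as)"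

lemma inc_a: "cc + 1 \<noteq> 0 \<Longrightarrow> inc (replicate k (-1) @ cc # rest) = replicate k 0 @ (cc + 1) # (rest :: 'p::prime_card mod_ring list)"
  by (induction k) auto

lemma inc_b: "inc (replicate k (-1 :: 'p::prime_card mod_ring)) = replicate (Suc k) 0"
  by (induction k) auto

lemma inc_ne: "inc gs \<noteq> []" by (cases gs) auto

lemma decomp: "\<exists>k rest. gs = replicate k (-1) @ rest \<and> (rest = [] \<or> hd rest + 1 \<noteq> (0::'p::prime_card mod_ring))"
proof (induction gs)
  case Nil thus ?case by auto
next
  case (Cons a gs)
  show ?case
  proof (cases "a + 1 = 0")
    case True
    hence a: "a = -1" by (simp add: add_eq_0_iff2)
    from Cons obtain k rest where "gs = replicate k (-1) @ rest" "rest = [] \<or> hd rest + 1 \<noteq> 0" by auto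
    hence "a # gs = replicate (Suc k) (-1) @ rest" using a by simp
    thus ?thesis using \<open>rest = [] \<or> hd rest + 1 \<noteq> 0\<close> by blast
  next
    case False
    hence "a # gs = replicate 0 (-1) @ (a # gs) \<and> (a # gs = [] \<or> hd (a # gs) + 1 \<noteq> 0)" by simp
    thus ?thesis by blast
  qed
qed

lemma tg_once:
  fixes x :: "bool list" and u v :: "'p::prime_card mod_ring"
  assumes lf: "length fs = R" and dg: "length gs = d" and dp: "length ps = d" and d1: "1 \<le> d"
    and dR: "d < R" and HB: "HB \<le> Suc Lb"
  shows "gpoly gs dvd gpoly fs \<Longrightarrow> \<exists>u' v' ps'. length ps' = d \<and>
      reach (okb R Lb) x (cf 10 u v I 0 0 0 HB (tp fs) (tp gs) (tp ps) TB os)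
         (cf 25 u' v' I 0 0 0 HB (tp fs) (tp gs) (tp ps') TB os)"
    and "\<not> gpoly gs dvd gpoly fs \<Longrightarrow> \<exists>u' v' ps'. length ps' = length (inc gs) \<and>
      reach (okb R Lb) x (cf 10 u v I 0 0 0 HB (tp fs) (tp gs) (tp ps) TB os)
         (cf 10 u' v' I 0 0 0 HB (tp fs) (tp (inc gs)) (tp ps') TB os)"
proof -
  have s: "reach (okb R Lb) x (cf 10 u v I 0 0 0 HB (tp fs) (tp gs) (tp ps) TB os)
     (cf 14 u v I R (Suc d) (Suc d) HB (tp fs) (tp gs) (tp (pinit d)) TB os)"
    using tg_start[OF lf dg dp d1 _ HB, of x u v I TB os] dR by simp
  have i0: "gpoly gs dvd Poly (drop R fs @ [1]) - Poly (pinit d)"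
    using lf d1 by (simp add: Poly_pinit one_pCons[symmetric])
  obtain u1 v1 ps1 where h: "length ps1 = d" "gpoly gs dvd Poly (fs @ [1]) - Poly ps1"
    "reach (okb R Lb) x (cf 14 u v I R (Suc d) (Suc d) HB (tp fs) (tp gs) (tp (pinit d)) TB os)
        (cf 14 u1 v1 I 0 (Suc d) (Suc d) HB (tp fs) (tp gs) (tp ps1) TB os)"
    using horner_loop[OF lf dg d1 dR HB, of R "pinit d" x u v I TB os] i0 d1 by auto
  have e: "reach (okb R Lb) x (cf 14 u1 v1 I 0 (Suc d) (Suc d) HB (tp fs) (tp gs) (tp ps1) TB os)
     (cf 21 u1 v1 I 0 d d HB (tp fs) (tp gs) (tp ps1) TB os)"
    by (rule horner_end[OF dR HB])
  have sh: "reach (okb R Lb) x (cf 10 u v I 0 0 0 HB (tp fs) (tp gs) (tp ps) TB os)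
     (cf 21 u1 v1 I 0 d d HB (tp fs) (tp gs) (tp ps1) TB os)"
    using reach_trans[OF s reach_trans[OF h(3) e]] .
  have gd: "gpoly gs dvd gpoly fs \<longleftrightarrow> (\<forall>i<d. ps1 ! i = 0)"
    using gdiv[OF h(1) dg d1 h(2)] unfolding gpoly_def .
  show "gpoly gs dvd gpoly fs \<Longrightarrow> \<exists>u' v' ps'. length ps' = d \<and>
      reach (okb R Lb) x (cf 10 u v I 0 0 0 HB (tp fs) (tp gs) (tp ps) TB os)
         (cf 25 u' v' I 0 0 0 HB (tp fs) (tp gs) (tp ps') TB os)"
  proof -
    assume "gpoly gs dvd gpoly fs"
    hence z: "\<forall>i<d. ps1 ! i = 0" using gd by simp
    have "reach (okb R Lb) x (cf 21 u1 v1 I 0 d d HB (tp fs) (tp gs) (tp ps1) TB os)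
       (cf 25 u1 v1 I 0 0 0 HB (tp fs) (tp gs) (tp ps1) TB os)"
      by (rule z_zero) (use dR HB dg h(1) z in auto)
    thus ?thesis using reach_trans[OF sh] h(1) by blast
  qed
  show "\<not> gpoly gs dvd gpoly fs \<Longrightarrow> \<exists>u' v' ps'. length ps' = length (inc gs) \<and>
      reach (okb R Lb) x (cf 10 u v I 0 0 0 HB (tp fs) (tp gs) (tp ps) TB os)
         (cf 10 u' v' I 0 0 0 HB (tp fs) (tp (inc gs)) (tp ps') TB os)"
  proof -
    assume "\<not> gpoly gs dvd gpoly fs"
    hence z: "\<not> (\<forall>i<d. ps1 ! i = 0)" using gd by simp
    obtain c where c: "1 \<le> c" "c \<le> d" "reach (okb R Lb) x (cf 21 u1 v1 I 0 d d HB (tp fs) (tp gs) (tp ps1) TB os)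
       (cf 22 u1 v1 I 0 c c HB (tp fs) (tp gs) (tp ps1) TB os)"
      using z_nonzero[of d R HB Lb gs ps1 d x u1 v1 I "tp fs" TB os] dR HB dg h(1) z by auto
    have c2: "reach (okb R Lb) x (cf 22 u1 v1 I 0 c c HB (tp fs) (tp gs) (tp ps1) TB os)
       (cf 23 u1 v1 I 0 1 1 HB (tp fs) (tp gs) (tp ps1) TB os)"
      by (rule z22) (use dR HB dg c in auto)
    have pre: "reach (okb R Lb) x (cf 10 u v I 0 0 0 HB (tp fs) (tp gs) (tp ps) TB os)
       (cf 23 u1 v1 I 0 1 1 HB (tp fs) (tp gs) (tp ps1) TB os)"
      using reach_trans[OF sh reach_trans[OF c(3) c2]] .
    obtain k rest where gs: "gs = replicate k (-1) @ rest" and r: "rest = [] \<or> hd rest + 1 \<noteq> 0"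
      using decomp[of gs] by auto
    show ?thesis
    proof (cases rest)
      case Nil
      hence gk: "gs = replicate k (-1)" and kd: "k = d" using gs dg by auto
      have "reach (okb R Lb) x (cf 23 u1 v1 I 0 1 1 HB (tp fs) (tp gs) (tp ps1) TB os)
         (cf 10 u1 v1 I 0 0 0 HB (tp fs) (tp (replicate (Suc k) 0)) (tp (ps1 @ [0])) TB os)"
        by (rule incg_b[OF gk]) (use h(1) kd dR HB in auto)
      moreover have ig: "inc gs = replicate (Suc k) 0" using gk inc_b by simp
      moreover have "length (ps1 @ [0]) = length (inc gs)" unfolding ig using h(1) kd by simp
      ultimately show ?thesis using reach_trans[OF pre] by metis
    next
      case (Cons cc rest')
      hence gk: "gs = replicate k (-1) @ cc # rest'" and cc: "cc + 1 \<noteq> 0" using gs r by auto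
      have "reach (okb R Lb) x (cf 23 u1 v1 I 0 1 1 HB (tp fs) (tp gs) (tp ps1) TB os)
         (cf 10 u1 v1 I 0 0 0 HB (tp fs) (tp (replicate k 0 @ (cc + 1) # rest')) (tp ps1) TB os)"
        by (rule incg_a[OF gk cc]) (use dg dR HB in auto)
      moreover have ig: "inc gs = replicate k 0 @ (cc + 1) # rest'" using gk inc_a[OF cc] by simp
      moreover have "length ps1 = length (inc gs)" unfolding ig using gk h(1) dg by simp
      ultimately show ?thesis using reach_trans[OF pre] by metis
    qed
  qed
qed


lemma to_int_1: "to_int_mod_ring (1::'p::prime_card mod_ring) = 1" by transfer simp

lemma idx_add1: "idx (a + 1 :: 'p::prime_card mod_ring) = Suc (idx a) mod CARD('p)"
proof -
  have r: "to_int_mod_ring a \<in> range (to_int_mod_ring :: 'p mod_ring \<Rightarrow> int)" by (rule rangeI)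
  hence nn: "0 \<le> to_int_mod_ring a" unfolding range_to_int_mod_ring by simp
  have "idx (a + 1) = nat ((to_int_mod_ring a + 1) mod int CARD('p))"
    unfolding idx_def to_int_mod_ring_add to_int_1 ..
  also have "\<dots> = nat (to_int_mod_ring a + 1) mod nat (int CARD('p))"
    using nn by (subst nat_mod_distrib) auto
  also have "\<dots> = Suc (idx a) mod CARD('p)" unfolding idx_def using nn by (simp add: nat_add_distrib)
  finally show ?thesis .
qed

lemma idx_m1: assumes "a + 1 = (0::'p::prime_card mod_ring)" shows "Suc (idx a) = CARD('p)"
proof -
  have "Suc (idx a) mod CARD('p) = 0" using idx_add1[of a] assms by simp
  moreover have "Suc (idx a) \<le> CARD('p)" using idx_lt[of a] by simp
  ultimately show ?thesis by (metis Suc_le_lessD le_neq_implies_less mod_less nat.distinct(1))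
qed

lemma idx_p1: assumes "a + 1 \<noteq> (0::'p::prime_card mod_ring)" shows "idx (a + 1) = Suc (idx a)"
proof -
  have "Suc (idx a) \<noteq> CARD('p)"
  proof
    assume "Suc (idx a) = CARD('p)"
    hence "idx (a + 1) = idx (0::'p mod_ring)" using idx_add1[of a] by simp
    thus False using assms idx_inj by blast
  qed
  hence "Suc (idx a) < CARD('p)" using idx_lt[of a] by simp
  thus ?thesis using idx_add1[of a] by simp
qed

fun key :: "'p::prime_card mod_ring list \<Rightarrow> nat" where
  "key [] = 0"
| "key (a # as) = Suc (idx a) + CARD('p) * key as"

lemma key_inc: "key (inc gs) = Suc (key gs)"
proof (induction gs)
  case (Cons a as)
  show ?case
  proof (cases "a + 1 = 0")
    case True
    thus ?thesis using Cons idx_m1[OF True] by simp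
  next
    case False
    thus ?thesis using idx_p1[OF False] by simp
  qed
qed simp

lemma bij_num: "(i::nat) < p \<Longrightarrow> j < p \<Longrightarrow> i + p * k1 = j + p * k2 \<Longrightarrow> i = j \<and> k1 = k2"
proof -
  assume a: "i < p" "j < p" "i + p * k1 = j + p * k2"
  have "(i + p * k1) mod p = i" "(i + p * k1) div p = k1" using a(1) by auto
  moreover have "(j + p * k2) mod p = j" "(j + p * k2) div p = k2" using a(2) by auto
  ultimately show ?thesis using a(3) by metis
qed

lemma key_inj: "key xs = key (ys :: 'p::prime_card mod_ring list) \<Longrightarrow> xs = ys"
proof (induction xs arbitrary: ys)
  case Nil thus ?case by (cases ys) auto
next
  case (Cons a as)
  then obtain b bs where ys: "ys = b # bs" by (cases ys) auto
  have "idx a + CARD('p) * key as = idx b + CARD('p) * key bs" using Cons.prems ys by simp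
  hence "idx a = idx b \<and> key as = key bs" using bij_num[OF idx_lt[of a] idx_lt[of b]] by blast
  thus ?case using Cons.IH ys idx_inj by blast
qed

fun SS :: "nat \<Rightarrow> nat \<Rightarrow> nat" where
  "SS p 0 = 0"
| "SS p (Suc n) = Suc (p * SS p n)"

lemma key_bounds: "SS CARD('p) (length gs) \<le> key (gs :: 'p::prime_card mod_ring list) \<and>
     key gs < SS CARD('p) (Suc (length gs))"
proof (induction gs)
  case Nil thus ?case by simp
next
  case (Cons a as)
  let ?p = "CARD('p)"
  have a1: "?p * SS ?p (length as) \<le> ?p * key as" using Cons by simp
  have "?p * SS ?p (length as) \<le> idx a + ?p * key as" using a1 by linarith
  hence 1: "SS ?p (length (a # as)) \<le> key (a # as)" by simp
  have b1: "Suc (key as) \<le> SS ?p (Suc (length as))" using Cons by simp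
  have b2: "?p * Suc (key as) \<le> ?p * SS ?p (Suc (length as))" using b1 by (rule mult_le_mono2)
  have b3: "Suc (idx a) \<le> ?p" using idx_lt[of a] by simp
  have "key (a # as) = Suc (idx a) + ?p * key as" by simp
  also have "\<dots> \<le> ?p + ?p * key as" using b3 by simp
  also have "\<dots> = ?p * Suc (key as)" by simp
  also have "\<dots> \<le> ?p * SS ?p (Suc (length as))" using b2 .
  finally have "key (a # as) \<le> ?p * SS ?p (Suc (length as))" .
  hence 2: "key (a # as) < SS ?p (Suc (length (a # as)))" by simp
  show ?case using 1 2 by blast
qed

lemma SS_mono: "m \<le> n \<Longrightarrow> SS CARD('p::prime_card) m \<le> SS CARD('p) n"
proof (induction n)
  case (Suc n)
  have "SS CARD('p) n \<le> SS CARD('p) (Suc n)"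
  proof -
    have "SS CARD('p) n \<le> CARD('p) * SS CARD('p) n" by simp
    thus ?thesis unfolding SS.simps by (rule le_SucI)
  qed
  thus ?case using Suc by (cases "m = Suc n") auto
qed simp

lemma key_len: "key (gs :: 'p::prime_card mod_ring list) \<le> key (gs' :: 'p mod_ring list) \<Longrightarrow> length gs \<le> length gs'"
proof (rule ccontr)
  assume a: "key gs \<le> key gs'" "\<not> length gs \<le> length gs'"
  have "key gs' < SS CARD('p) (Suc (length gs'))" using key_bounds[of gs'] by blast
  also have "\<dots> \<le> SS CARD('p) (length gs)" using a(2) by (intro SS_mono) simp
  also have "\<dots> \<le> key gs" using key_bounds[of gs] by blast
  finally show False using a(1) by simp
qed

lemma key_lt_SS: "length (gs :: 'p::prime_card mod_ring list) < R \<Longrightarrow> key gs < SS CARD('p) R"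
proof -
  assume "length gs < R"
  hence "SS CARD('p) (Suc (length gs)) \<le> SS CARD('p) R" by (intro SS_mono) simp
  thus ?thesis using key_bounds[of gs] by simp
qed

lemma key_le_SS: "key (gs :: 'p::prime_card mod_ring list) \<le> SS CARD('p) R \<Longrightarrow> length gs \<le> R"
proof (rule ccontr)
  assume a: "key gs \<le> SS CARD('p) R" "\<not> length gs \<le> R"
  have "SS CARD('p) (Suc R) \<le> SS CARD('p) (length gs)" using a(2) by (intro SS_mono) simp
  also have "\<dots> \<le> key gs" using key_bounds[of gs] by blast
  finally have "SS CARD('p) (Suc R) \<le> key gs" .
  moreover have "SS CARD('p) R \<le> CARD('p) * SS CARD('p) R" by simp
  ultimately show False using a(1) by simp
qed

lemma g_irr:
  fixes x :: "bool list" and u v :: "'p::prime_card mod_ring"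
  assumes lf: "length fs = R" and HB: "HB \<le> Suc Lb"
    and irr: "\<And>g. 1 \<le> length g \<Longrightarrow> length g < R \<Longrightarrow> \<not> gpoly g dvd gpoly fs"
  shows "SS CARD('p) R - key gs = n \<Longrightarrow> 1 \<le> length gs \<Longrightarrow> length gs \<le> R \<Longrightarrow> length ps = length gs \<Longrightarrow>
    \<exists>u' v' gs' ps'. reach (okb R Lb) x (cf 10 u v I 0 0 0 HB (tp fs) (tp gs) (tp ps) TB os)
       (cf 30 u' v' I (Suc R) (Suc R) (Suc R) HB (tp fs) (tp gs') (tp ps') TB os)"
proof (induction n arbitrary: gs ps u v rule: less_induct)
  case (less n)
  show ?case
  proof (cases "length gs = R")
    case True
    have "reach (okb R Lb) x (cf 10 u v I 0 0 0 HB (tp fs) (tp gs) (tp ps) TB os)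
     (cf 30 u v I (Suc R) (Suc R) (Suc R) HB (tp fs) (tp gs) (tp (pinit (length gs))) TB os)"
      using tg_start[OF lf refl less.prems(4) less.prems(2) less.prems(3) HB, of x u v I TB os] True by simp
    thus ?thesis by blast
  next
    case False
    hence lt: "length gs < R" using less.prems by simp
    obtain u' v' ps' where s: "length ps' = length (inc gs)"
      "reach (okb R Lb) x (cf 10 u v I 0 0 0 HB (tp fs) (tp gs) (tp ps) TB os)
         (cf 10 u' v' I 0 0 0 HB (tp fs) (tp (inc gs)) (tp ps') TB os)"
      using tg_once(2)[OF lf refl less.prems(4) less.prems(2) lt HB, of x u v I TB os] irr[OF less.prems(2) lt] by blast
    have k: "key gs < SS CARD('p) R" using key_lt_SS[OF lt] .
    have ki: "key (inc gs) = Suc (key gs)" by (rule key_inc)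
    have "SS CARD('p) R - key (inc gs) < n" using k ki less.prems(1) by simp
    moreover have "1 \<le> length (inc gs)" using inc_ne[of gs] by (cases "inc gs") auto
    moreover have "length (inc gs) \<le> R" using k ki by (intro key_le_SS) simp
    ultimately obtain u2 v2 gs2 ps2 where "reach (okb R Lb) x (cf 10 u' v' I 0 0 0 HB (tp fs) (tp (inc gs)) (tp ps') TB os)
       (cf 30 u2 v2 I (Suc R) (Suc R) (Suc R) HB (tp fs) (tp gs2) (tp ps2) TB os)"
      using less.IH[OF _ refl, of "inc gs" ps' u' v'] s(1) by auto
    thus ?thesis using reach_trans[OF s(2)] by blast
  qed
qed

lemma g_red:
  fixes x :: "bool list" and u v :: "'p::prime_card mod_ring"
  assumes lf: "length fs = R" and HB: "HB \<le> Suc Lb"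
    and gt: "1 \<le> length gt" "length gt < R" "gpoly gt dvd gpoly fs"
  shows "key gt - key gs = n \<Longrightarrow> key gs \<le> key gt \<Longrightarrow> 1 \<le> length gs \<Longrightarrow> length ps = length gs \<Longrightarrow>
    \<exists>u' v' gs' ps'. length gs' \<le> R \<and> length ps' = length gs' \<and>
      reach (okb R Lb) x (cf 10 u v I 0 0 0 HB (tp fs) (tp gs) (tp ps) TB os)
       (cf 25 u' v' I 0 0 0 HB (tp fs) (tp gs') (tp ps') TB os)"
proof (induction n arbitrary: gs ps u v rule: less_induct)
  case (less n)
  have lt: "length gs < R" using key_len[OF less.prems(2)] gt(2) by simp
  show ?case
  proof (cases "gpoly gs dvd gpoly fs")
    case True
    obtain u' v' ps' where "length ps' = length gs"
      "reach (okb R Lb) x (cf 10 u v I 0 0 0 HB (tp fs) (tp gs) (tp ps) TB os)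
         (cf 25 u' v' I 0 0 0 HB (tp fs) (tp gs) (tp ps') TB os)"
      using tg_once(1)[OF lf refl less.prems(4) less.prems(3) lt HB, of x u v I TB os] True by blast
    thus ?thesis using lt by (intro exI[of _ u'] exI[of _ v'] exI[of _ gs] exI[of _ ps']) auto
  next
    case False
    obtain u' v' ps' where s: "length ps' = length (inc gs)"
      "reach (okb R Lb) x (cf 10 u v I 0 0 0 HB (tp fs) (tp gs) (tp ps) TB os)
         (cf 10 u' v' I 0 0 0 HB (tp fs) (tp (inc gs)) (tp ps') TB os)"
      using tg_once(2)[OF lf refl less.prems(4) less.prems(3) lt HB, of x u v I TB os] False by blast
    have "gs \<noteq> gt" using False gt(3) by auto
    hence "key gs \<noteq> key gt" using key_inj by blast
    hence k: "key gs < key gt" using less.prems(2) by simp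
    have ki: "key (inc gs) = Suc (key gs)" by (rule key_inc)
    have "key gt - key (inc gs) < n" using k ki less.prems(1) by simp
    moreover have "key (inc gs) \<le> key gt" using k ki by simp
    moreover have "1 \<le> length (inc gs)" using inc_ne[of gs] by (cases "inc gs") auto
    ultimately obtain u2 v2 gs2 ps2 where "length gs2 \<le> R" "length ps2 = length gs2"
      "reach (okb R Lb) x (cf 10 u' v' I 0 0 0 HB (tp fs) (tp (inc gs)) (tp ps') TB os)
       (cf 25 u2 v2 I 0 0 0 HB (tp fs) (tp gs2) (tp ps2) TB os)"
      using less.IH[OF _ refl, of "inc gs" ps' u' v'] s(1) by blast
    thus ?thesis using reach_trans[OF s(2)] by blast
  qed
qed


lemma gpoly_ne0[simp]: "gpoly gs \<noteq> 0"
proof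
  assume "gpoly gs = 0"
  hence "lead_coeff (gpoly gs) = 0" by simp
  thus False by (simp add: coeff_gpoly)
qed

lemma irr_nodiv:
  assumes irr: "irreducible (gpoly fs)" and g1: "1 \<le> length g" and gl: "length g < length fs"
  shows "\<not> gpoly g dvd gpoly fs"
proof
  assume "gpoly g dvd gpoly fs"
  then obtain h where h: "gpoly fs = gpoly g * h" by (auto elim: dvdE)
  have h0: "h \<noteq> 0" using h by auto
  from irreducibleD[OF irr h] show False
  proof
    assume "is_unit (gpoly g)"
    hence "degree (gpoly g) = 0" using is_unit_iff_degree[of "gpoly g"] by simp
    thus False using g1 by simp
  next
    assume "is_unit h"
    hence "degree h = 0" using is_unit_iff_degree[OF h0] by simp
    hence "degree (gpoly fs) = degree (gpoly g)" using h h0 by (simp add: degree_mult_eq)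
    thus False using gl by simp
  qed
qed

lemma monic_gpoly:
  assumes m: "lead_coeff h = (1::'p::prime_card mod_ring)"
  shows "gpoly (butlast (coeffs h)) = h" "length (butlast (coeffs h)) = degree h"
proof -
  have h0: "h \<noteq> 0" using m by auto
  have ne: "coeffs h \<noteq> []" using h0 by simp
  have l: "last (coeffs h) = 1" using last_coeffs_eq_coeff_degree[OF h0] m by simp
  have "butlast (coeffs h) @ [1] = coeffs h" using append_butlast_last_id[OF ne] l by simp
  thus "gpoly (butlast (coeffs h)) = h" unfolding gpoly_def by (simp add: Poly_coeffs)
  show "length (butlast (coeffs h)) = degree h" using length_coeffs_degree[OF h0] by simp
qed

lemma red_div:
  assumes nirr: "\<not> irreducible (gpoly fs)" and f1: "1 \<le> length fs"
  shows "\<exists>gt. 1 \<le> length gt \<and> length gt < length fs \<and> gpoly gt dvd gpoly fs"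
proof -
  let ?f = "gpoly fs"
  have f0: "?f \<noteq> 0" by simp
  have fu: "\<not> is_unit ?f" using is_unit_iff_degree[OF f0] f1 by (cases fs) auto
  obtain a b where ab: "?f = a * b" "\<not> is_unit a" "\<not> is_unit b"
    using nirr f0 fu unfolding irreducible_def by blast
  have a0: "a \<noteq> 0" and b0: "b \<noteq> 0" using ab f0 by auto
  have da: "degree a \<ge> 1" using ab(2) is_unit_iff_degree[OF a0] a0 by auto
  have db: "degree b \<ge> 1" using ab(3) is_unit_iff_degree[OF b0] b0 by auto
  have "degree ?f = degree a + degree b" using ab(1) a0 b0 by (simp add: degree_mult_eq)
  hence dal: "degree a < length fs" using db by simp
  let ?h = "normalize a"
  have mh: "lead_coeff ?h = 1" using monic_normalize[OF a0] .
  have hd: "?h dvd ?f" using ab(1) by (simp add: normalize_dvd_iff)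
  have dh: "degree ?h = degree a" by (rule degree_normalize)
  show ?thesis
    using monic_gpoly[OF mh] hd dh da dal by (intro exI[of _ "butlast (coeffs ?h)"]) auto
qed

lemma key_rep0: "key (replicate R (0::'p::prime_card mod_ring)) = SS CARD('p) R"
  by (induction R) auto

lemma f_loop:
  fixes x :: "bool list" and u v :: "'p::prime_card mod_ring" and ft :: "'p mod_ring list"
  assumes R1: "1 \<le> R" and HB: "HB \<le> Suc Lb" and ft: "length ft = R" "irreducible (gpoly ft)"
  shows "key ft - key fs = n \<Longrightarrow> key fs \<le> key ft \<Longrightarrow> length fs = R \<Longrightarrow>
    \<exists>fs' u' v' gs' ps'. length fs' = R \<and> irreducible (gpoly fs') \<and>
      reach (okb R Lb) x (cf 10 u v I 0 0 0 HB (tp fs) (tp [0]) (tp [0]) TB os)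
        (cf 30 u' v' I (Suc R) (Suc R) (Suc R) HB (tp fs') (tp gs') (tp ps') TB os)"
proof (induction n arbitrary: fs u v rule: less_induct)
  case (less n)
  have k0: "key [0::'p mod_ring] = 1" by simp
  show ?case
  proof (cases "irreducible (gpoly fs)")
    case True
    have irr: "\<And>g. 1 \<le> length g \<Longrightarrow> length g < R \<Longrightarrow> \<not> gpoly g dvd gpoly fs"
      using irr_nodiv[OF True] less.prems(3) by simp
    obtain u' v' gs' ps' where "reach (okb R Lb) x (cf 10 u v I 0 0 0 HB (tp fs) (tp [0]) (tp [0]) TB os)
       (cf 30 u' v' I (Suc R) (Suc R) (Suc R) HB (tp fs) (tp gs') (tp ps') TB os)"
      using g_irr[OF less.prems(3) HB irr refl, of "[0]" "[0]" x u v I TB os] R1 by auto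
    thus ?thesis using True less.prems(3) by blast
  next
    case False
    obtain gt where gt: "1 \<le> length gt" "length gt < R" "gpoly gt dvd gpoly fs"
      using red_div[OF False] less.prems(3) R1 by auto
    have "SS CARD('p) 1 \<le> SS CARD('p) (length gt)" using gt(1) by (rule SS_mono)
    hence "key [0::'p mod_ring] \<le> key gt" using key_bounds[of gt] by simp
    then obtain u1 v1 gs1 ps1 where r1: "length gs1 \<le> R" "length ps1 = length gs1"
      "reach (okb R Lb) x (cf 10 u v I 0 0 0 HB (tp fs) (tp [0]) (tp [0]) TB os)
       (cf 25 u1 v1 I 0 0 0 HB (tp fs) (tp gs1) (tp ps1) TB os)"
      using g_red[OF less.prems(3) HB gt refl, of "[0]" "[0]" x u v I TB os] by auto
    have "fs \<noteq> ft" using False ft(2) by auto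
    hence "key fs \<noteq> key ft" using key_inj by blast
    hence kl: "key fs < key ft" using less.prems(2) by simp
    have ki: "key (inc fs) = Suc (key fs)" by (rule key_inc)
    have li: "length (inc fs) \<le> R" using key_len[of "inc fs" ft] kl ki ft(1) by simp
    obtain k rest where fsd: "fs = replicate k (-1) @ rest" and r: "rest = [] \<or> hd rest + 1 \<noteq> 0"
      using decomp[of fs] by auto
    show ?thesis
    proof (cases rest)
      case Nil
      hence "inc fs = replicate (Suc k) 0" "k = R" using fsd inc_b less.prems(3) by auto
      thus ?thesis using li by simp
    next
      case (Cons cc rest')
      hence fk: "fs = replicate k (-1) @ cc # rest'" and cc: "cc + 1 \<noteq> 0" using fsd r by auto
      have ifs: "inc fs = replicate k 0 @ (cc + 1) # rest'" using fk inc_a[OF cc] by simp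
      have r2: "reach (okb R Lb) x (cf 25 u1 v1 I 0 0 0 HB (tp fs) (tp gs1) (tp ps1) TB os)
        (cf 10 u1 v1 I 0 0 0 HB (tp (inc fs)) (tp [0]) (tp [0]) TB os)"
        unfolding ifs by (rule incf[OF fk cc less.prems(3) refl r1(2) r1(1) HB])
      have lif: "length (inc fs) = R" using ifs fk less.prems(3) by simp
      obtain fs' u' v' gs' ps' where "length fs' = R" "irreducible (gpoly fs')"
        "reach (okb R Lb) x (cf 10 u1 v1 I 0 0 0 HB (tp (inc fs)) (tp [0]) (tp [0]) TB os)
        (cf 30 u' v' I (Suc R) (Suc R) (Suc R) HB (tp fs') (tp gs') (tp ps') TB os)"
      proof -
        have lt: "key ft - key (inc fs) < n" using kl ki less.prems(1) by simp
        have le: "key (inc fs) \<le> key ft" using kl ki by simp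
        show ?thesis using less.IH[OF lt refl le lif, where u=u1 and v=v1] that by blast
      qed
      thus ?thesis using reach_trans[OF r1(3) reach_trans[OF r2]] by blast
    qed
  qed
qed


declare nat_bits.simps[simp del]

lemma init_eq: "init_config (MM :: 'p::prime_card tm) = cf 0 0 0 0 0 0 0 0 (tp []) (tp []) (tp []) (tp []) []"
  unfolding init_config_def MM_def by (simp add: enc_def numeral_eq_Suc tp_nil)

lemma reach_run: "reach P x (init_config MM) c \<Longrightarrow> \<exists>t. run MM x t = c \<and> (\<forall>s\<le>t. P (run MM x s))"
  unfolding reach_def run_def by blast

lemma bits_pow: "n \<ge> 1 \<Longrightarrow> 2 ^ length (nat_bits n) \<le> 2 * n"
proof (induction n rule: less_induct)
  case (less n)
  have e: "nat_bits n = odd n # nat_bits (n div 2)" using less.prems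
    by (subst nat_bits.simps) simp
  show ?case
  proof (cases "n div 2 = 0")
    case True
    hence "nat_bits (n div 2) = []" by (subst nat_bits.simps) simp
    thus ?thesis using e less.prems by simp
  next
    case False
    hence "2 ^ length (nat_bits (n div 2)) \<le> 2 * (n div 2)" using less.prems by (intro less.IH) auto
    thus ?thesis using e by simp
  qed
qed

lemma bits_log: assumes "n \<ge> 1" shows "real (length (nat_bits n)) \<le> 1 + log 2 (real n)"
proof -
  have "real (length (nat_bits n)) = log 2 (2 ^ length (nat_bits n))" by (simp add: log_pow_cancel)
  also have "\<dots> \<le> log 2 (2 * real n)"
  proof (rule log_mono)
    show "(2::real) ^ length (nat_bits n) \<le> 2 * real n"
      using bits_pow[OF assms] by (metis of_nat_le_iff of_nat_mult of_nat_numeral of_nat_power)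
  qed auto
  also have "\<dots> = 1 + log 2 (real n)" using assms by (simp add: log_mult)
  finally show ?thesis .
qed

lemma space_bound:
  assumes ok: "\<forall>s\<le>t. okb R Lb (run (MM :: 'p::prime_card tm) x s)"
  shows "space_used (MM :: 'p tm) x t \<le> 3 * (R + 2) + (Lb + 2)"
proof -
  define b :: "nat \<Rightarrow> nat" where "b i = (if i = 3 then Lb + 2 else R + 2)" for i
  have mx: "Max {Suc (heads (run (MM :: 'p tm) x t') ! i) | t'. t' \<le> t} \<le> b i" if i: "i < 4" for i
  proof (rule Max.boundedI)
    have "{Suc (heads (run (MM :: 'p tm) x t') ! i) | t'. t' \<le> t} = (\<lambda>t'. Suc (heads (run (MM :: 'p tm) x t') ! i)) ` {..t}"
      by auto
    thus "finite {Suc (heads (run (MM :: 'p tm) x t') ! i) | t'. t' \<le> t}" by simp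
    show "{Suc (heads (run (MM :: 'p tm) x t') ! i) | t'. t' \<le> t} \<noteq> {}" by auto
    fix a assume "a \<in> {Suc (heads (run (MM :: 'p tm) x t') ! i) | t'. t' \<le> t}"
    then obtain t' where t': "t' \<le> t" "a = Suc (heads (run (MM :: 'p tm) x t') ! i)" by auto
    have "okb R Lb (run (MM :: 'p tm) x t')" using ok t'(1) by simp
    hence "heads (run (MM :: 'p tm) x t') ! 0 \<le> Suc R" "heads (run (MM :: 'p tm) x t') ! 1 \<le> Suc R"
      "heads (run (MM :: 'p tm) x t') ! 2 \<le> Suc R" "heads (run (MM :: 'p tm) x t') ! 3 \<le> Suc Lb"
      unfolding okb_def by auto
    moreover have "i = 0 \<or> i = 1 \<or> i = 2 \<or> i = 3" using i by auto
    ultimately show "a \<le> b i" using t'(2) unfolding b_def by auto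
  qed
  have "space_used (MM :: 'p tm) x t = (\<Sum>i<4. Max {Suc (heads (run (MM :: 'p tm) x t') ! i) | t'. t' \<le> t})"
    unfolding space_used_def by (simp add: MM_def)
  also have "\<dots> \<le> (\<Sum>i<4. b i)" by (rule sum_mono) (use mx in auto)
  also have "\<dots> = 3 * (R + 2) + (Lb + 2)" by (simp add: b_def numeral_eq_Suc)
  finally show ?thesis .
qed

theorem lemmaB5:
  fixes r :: "nat \<Rightarrow> nat"
  assumes "\<And>n. r n > 0"
  shows "\<exists>(M :: ('p::prime_card) tm) (C :: real). wf_tm M \<and>
           (\<forall>n. \<exists>f :: 'p mod_ring poly.
                  irreducible f \<and> degree f = r n \<and>
                  computes_in_space M (nat_bits (r n)) (coeffs f)
                    (3 * real (r n) + C * log 2 (real (r n)) + C))"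
proof -
  have main: "\<exists>f :: 'p mod_ring poly. irreducible f \<and> degree f = r n \<and>
                  computes_in_space (MM :: 'p tm) (nat_bits (r n)) (coeffs f)
                    (3 * real (r n) + 9 * log 2 (real (r n)) + 9)" for n
  proof -
    define R where "R = r n"
    have R1: "1 \<le> R" using assms[of n] unfolding R_def by simp
    define x where "x = nat_bits R"
    define Lb where "Lb = length x"
    let ?P = "okb R Lb :: 'p config \<Rightarrow> bool"
    have r1: "reach ?P x (cf 0 (0::'p mod_ring) 0 0 0 0 0 0 (tp []) (tp []) (tp []) (tp []) [])
       (cf 4 0 0 (length x) 1 0 0 1 (tp []) (tp []) (tp []) (tp (map b2v x)) [])"
      unfolding Lb_def by (rule ph_copy)
    have r2: "reach ?P x (cf 4 (0::'p mod_ring) 0 (length x) 1 0 0 1 (tp []) (tp []) (tp []) (tp (map b2v x)) [])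
       (cf 6 0 0 (length x) (Suc R) 0 0 (Suc Lb) (tp (replicate R 0)) (tp []) (tp []) (tp (replicate Lb 1)) [])"
    proof -
      have bx: "bvl (map b2v x :: 'p mod_ring list) = R" unfolding x_def by (rule bvl_bits)
      have sx: "set (map b2v x) \<subseteq> {0, 1::'p mod_ring}" by (rule bits01)
      show ?thesis using dec_loop[OF sx bx, of 0 R Lb x "0::'p mod_ring" 0 "length x" "tp []" "tp []" "[]"]
        unfolding Lb_def by simp
    qed
    have r3: "reach ?P x (cf 6 (0::'p mod_ring) 0 (length x) (Suc R) 0 0 (Suc Lb) (tp (replicate R 0)) (tp []) (tp []) (tp (replicate Lb 1)) [])
       (cf 10 0 0 (length x) 0 0 0 (Suc Lb) (tp (replicate R 0)) (tp [0]) (tp [0]) (tp (replicate Lb 1)) [])"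
      by (rule main_init) (use R1 in auto)
    obtain f0 :: "'p mod_ring poly" where f0: "irreducible f0" "degree f0 = R"
      using exists_irreducible[of R] R1 by auto
    have f00: "f0 \<noteq> 0" using f0(1) by auto
    let ?h = "normalize f0"
    have mh: "lead_coeff ?h = 1" using monic_normalize[OF f00] .
    define ft where "ft = butlast (coeffs ?h)"
    have gft: "gpoly ft = ?h" and lft: "length ft = R"
      using monic_gpoly[OF mh] f0(2) unfolding ft_def by (auto simp: degree_normalize)
    have ift: "irreducible (gpoly ft)" using f0(1) gft by (simp add: irreducible_normalize_iff)
    have kk: "key (replicate R (0::'p mod_ring)) \<le> key ft"
      using key_rep0[of R, where 'p='p] key_bounds[of ft] lft by simp
    obtain fs' u' v' gs' ps' where fl: "length fs' = R" "irreducible (gpoly fs')"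
      "reach ?P x (cf 10 (0::'p mod_ring) 0 (length x) 0 0 0 (Suc Lb) (tp (replicate R 0)) (tp [0]) (tp [0]) (tp (replicate Lb 1)) [])
        (cf 30 u' v' (length x) (Suc R) (Suc R) (Suc R) (Suc Lb) (tp fs') (tp gs') (tp ps') (tp (replicate Lb 1)) [])"
      using f_loop[OF R1 _ lft ift refl kk, of "Suc Lb" Lb x 0 0 "length x" "tp (replicate Lb 1)" "[]"] by auto
    have r5: "reach ?P x (cf 30 u' v' (length x) (Suc R) (Suc R) (Suc R) (Suc Lb) (tp fs') (tp gs') (tp ps') (tp (replicate Lb 1)) [])
       (cf 1 0 0 (length x) (Suc R) (Suc R) (Suc R) (Suc Lb) (tp fs') (tp gs') (tp ps') (tp (replicate Lb 1)) ([] @ fs' @ [1]))"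
      by (rule outp_phase[OF fl(1)]) simp
    have all: "reach ?P x (init_config MM)
       (cf 1 0 0 (length x) (Suc R) (Suc R) (Suc R) (Suc Lb) (tp fs') (tp gs') (tp ps') (tp (replicate Lb 1)) ([] @ fs' @ [1]))"
      unfolding init_eq using reach_trans[OF r1 reach_trans[OF r2 reach_trans[OF r3 reach_trans[OF fl(3) r5]]]] .
    obtain t where t: "run MM x t = cf 1 (0::'p mod_ring) 0 (length x) (Suc R) (Suc R) (Suc R) (Suc Lb) (tp fs') (tp gs') (tp ps') (tp (replicate Lb 1)) ([] @ fs' @ [1])"
      "\<forall>s\<le>t. ?P (run MM x s)" using reach_run[OF all] by blast
    have sp: "space_used (MM :: 'p tm) x t \<le> 3 * (R + 2) + (Lb + 2)" by (rule space_bound[OF t(2)])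
    have lb: "real Lb \<le> 1 + log 2 (real R)" unfolding Lb_def x_def using bits_log[OF R1] .
    have lg: "log 2 (real R) \<ge> 0" using R1 by simp
    have "real (space_used (MM :: 'p tm) x t) \<le> 3 * real R + 9 * log 2 (real R) + 9"
    proof -
      have "real (space_used (MM :: 'p tm) x t) \<le> real (3 * (R + 2) + (Lb + 2))" using sp by linarith
      also have "\<dots> = 3 * real R + real Lb + 8" by simp
      also have "\<dots> \<le> 3 * real R + 9 * log 2 (real R) + 9" using lb lg by linarith
      finally show ?thesis .
    qed
    moreover have "cstate (run (MM :: 'p tm) x t) = 1" using t(1) by (simp add: enc_def)
    moreover have "outp (run (MM :: 'p tm) x t) = coeffs (gpoly fs')" using t(1) by (simp add: coeffs_gpoly)
    ultimately have "computes_in_space (MM :: 'p tm) x (coeffs (gpoly fs')) (3 * real R + 9 * log 2 (real R) + 9)"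
      unfolding computes_in_space_def by blast
    thus ?thesis using fl(1,2) unfolding R_def x_def by (intro exI[of _ "gpoly fs'"]) auto
  qed
  show ?thesis
    by (rule exI[of _ MM], rule exI[of _ 9]) (use wf_MM main in blast)
qed


end
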